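(* Let $q>0$ be real and let $\mathfrak{M}^{\rm I}_q\subset\widetilde{SL}(2)_q$ and the involution $\dagger$ be as in the context. Let $U$ be a finite-dimensional Hermitian vector space with inner product $(\cdot,\cdot)$, conjugate linear in the first argument, and define the pairing $(\cdot,\cdot):(U\otimes\mathfrak{M}^{\rm I}_q)\times(U\otimes\mathfrak{M}^{\rm I}_q)\to\mathfrak{M}^{\rm I}_q$ by $(v_1\otimes f_1,v_2\otimes f_2)=(v_1,v_2)\,f_1^\dagger f_2$, extended additively. Then for $\sigma\in U\otimes\mathfrak{M}^{\rm I}_q$ we have $(\sigma,\sigma)=0$ if and only if $\sigma=0$.
   Context: $SL(2)_q$ is the unital associative $\mathbb{C}$-algebra generated by $g_{11'},g_{12'},g_{21'},g_{22'}$ with relations $g_{11'}g_{12'}=q^{-1}g_{12'}g_{11'}$, $g_{11'}g_{21'}=q^{-1}g_{21'}g_{11'}$, $g_{12'}g_{22'}=q^{-1}g_{22'}g_{12'}$, $g_{21'}g_{22'}=q^{-1}g_{22'}g_{21'}$, $g_{12'}g_{21'}=g_{21'}g_{12'}$, and $g_{11'}g_{22'}-q^{-1}g_{12'}g_{21'}=g_{22'}g_{11'}-qg_{21'}g_{12'}=1$. The algebra $\widetilde{SL}(2)_q$ is obtained by adjoining an invertible generator $\delta$ with $\delta g_{11'}=g_{11'}\delta$, $\delta g_{12'}=qg_{12'}\delta$, $\delta g_{21'}=q^{-1}g_{21'}\delta$, $\delta g_{22'}=g_{22'}\delta$. The involution $\dagger$ is the conjugate-linear anti-automorphism of $\widetilde{SL}(2)_q$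 with $g_{11'}^\dagger=g_{22'}$, $g_{12'}^\dagger=-g_{21'}$, $g_{21'}^\dagger=-g_{12'}$, $g_{22'}^\dagger=g_{11'}$, $\delta^\dagger=\delta$. Set $x_{11'}=\delta g_{11'}$, $x_{12'}=q^{-1/2}\delta g_{12'}$, $x_{21'}=q^{1/2}\delta g_{21'}$, $x_{22'}=\delta g_{22'}$, and let $\mathfrak{M}^{\rm I}_q$ be the subalgebra generated by these four elements (the quantum affine Minkowski space). It satisfies $x_{11'}x_{12'}=x_{12'}x_{11'}$, $x_{21'}x_{22'}=x_{22'}x_{21'}$, $[x_{11'},x_{22'}]+[x_{21'},x_{12'}]=0$, $x_{11'}x_{21'}=q^{-2}x_{21'}x_{11'}$, $x_{12'}x_{22'}=q^{-2}x_{22'}x_{12'}$, $x_{21'}x_{12'}=q^2x_{12'}x_{21'}$, and is preserved by $\dagger$: $x_{11'}^\dagger=x_{22'}$, $x_{12'}^\dagger=-x_{21'}$, $x_{21'}^\dagger=-x_{12'}$, $x_{22'}^\dagger=x_{11'}$. *)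

theory Defs
  imports "HOL-Analysis.Analysis" "HOL-Library.Poly_Mapping"
begin

datatype gen = G11 | G12 | G21 | G22 | Dl | DlInv

text \<open>Words in the generators; concatenation makes them a monoid, so that
  finitely supported complex-valued functions on words (convolution product)
  form the free unital associative C-algebra on the generators.\<close>
datatype word = Word "gen list"

instantiation word :: monoid_add
begin
definition zero_word :: word where "zero_word = Word []"
fun plus_word :: "word \<Rightarrow> word \<Rightarrow> word" where
  "plus_word (Word a) (Word b) = Word (a @ b)"
instance
proof
  fix a b c :: word
  show "a + b + c = a + (b + c)" by (cases a; cases b; cases c) simp
  show "0 + a = a" by (cases a) (simp add: zero_word_def)
  show "a + 0 = a" by (cases a) (simp add: zero_word_def)
qed
end

type_synonym falg = "word \<Rightarrow>\<^sub>0 complex"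

definition gen_el :: "gen \<Rightarrow> falg" where
  "gen_el g = Poly_Mapping.single (Word [g]) 1"

definition scalar :: "complex \<Rightarrow> falg" where
  "scalar c = Poly_Mapping.single 0 c"

definition sl_rels :: "real \<Rightarrow> falg set" where
  "sl_rels q = (let qq = complex_of_real q; qi = complex_of_real (1 / q);
       g11 = gen_el G11; g12 = gen_el G12; g21 = gen_el G21; g22 = gen_el G22;
       d = gen_el Dl; di = gen_el DlInv in
     { g11 * g12 - scalar qi * g12 * g11,
       g11 * g21 - scalar qi * g21 * g11,
       g12 * g22 - scalar qi * g22 * g12,
       g21 * g22 - scalar qi * g22 * g21,
       g12 * g21 - g21 * g12,
       g11 * g22 - scalar qi * g12 * g21 - 1,
       g22 * g11 - scalar qq * g21 * g12 - 1,
       d * di - 1,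
       di * d - 1,
       d * g11 - g11 * d,
       d * g12 - scalar qq * g12 * d,
       d * g21 - scalar qi * g21 * d,
       d * g22 - g22 * d })"

text \<open>Two-sided ideal generated by the relations; an element of the free algebra
  represents zero in SL(2)_q-tilde iff it lies in this ideal.\<close>
inductive_set sl_ideal :: "real \<Rightarrow> falg set" for q :: real where
  rel: "r \<in> sl_rels q \<Longrightarrow> r \<in> sl_ideal q"
| zero: "0 \<in> sl_ideal q"
| add: "a \<in> sl_ideal q \<Longrightarrow> b \<in> sl_ideal q \<Longrightarrow> a + b \<in> sl_ideal q"
| mult: "a \<in> sl_ideal q \<Longrightarrow> x * a * y \<in> sl_ideal q"

fun dag_gen :: "gen \<Rightarrow> falg" where
  "dag_gen G11 = gen_el G22"
| "dag_gen G12 = - gen_el G21"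
| "dag_gen G21 = - gen_el G12"
| "dag_gen G22 = gen_el G11"
| "dag_gen Dl = gen_el Dl"
| "dag_gen DlInv = gen_el DlInv"

fun dag_list :: "gen list \<Rightarrow> falg" where
  "dag_list [] = 1"
| "dag_list (g # ws) = dag_list ws * dag_gen g"

fun dag_word :: "word \<Rightarrow> falg" where
  "dag_word (Word ws) = dag_list ws"

definition dagger :: "falg \<Rightarrow> falg" where
  "dagger f = (\<Sum>w\<in>Poly_Mapping.keys f. scalar (cnj (Poly_Mapping.lookup f w)) * dag_word w)"

definition x11 :: "real \<Rightarrow> falg" where "x11 q = gen_el Dl * gen_el G11"
definition x12 :: "real \<Rightarrow> falg" where
  "x12 q = scalar (complex_of_real (1 / sqrt q)) * gen_el Dl * gen_el G12"
definition x21 :: "real \<Rightarrow> falg" where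
  "x21 q = scalar (complex_of_real (sqrt q)) * gen_el Dl * gen_el G21"
definition x22 :: "real \<Rightarrow> falg" where "x22 q = gen_el Dl * gen_el G22"

text \<open>Representatives (in the free algebra) of elements of the unital subalgebra
  generated by the x's.\<close>
inductive_set minkowski :: "real \<Rightarrow> falg set" for q :: real where
  scal: "scalar c \<in> minkowski q"
| gx11: "x11 q \<in> minkowski q"
| gx12: "x12 q \<in> minkowski q"
| gx21: "x21 q \<in> minkowski q"
| gx22: "x22 q \<in> minkowski q"
| add: "a \<in> minkowski q \<Longrightarrow> b \<in> minkowski q \<Longrightarrow> a + b \<in> minkowski q"
| mult: "a \<in> minkowski q \<Longrightarrow> b \<in> minkowski q \<Longrightarrow> a * b \<in> minkowski q"

text \<open>U = C^n with the standard Hermitian inner product (conjugate linear in the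
  first argument); vectors are functions nat => complex, coordinates i < n.\<close>
definition herm :: "nat \<Rightarrow> (nat \<Rightarrow> complex) \<Rightarrow> (nat \<Rightarrow> complex) \<Rightarrow> complex" where
  "herm n v w = (\<Sum>i<n. cnj (v i) * w i)"

text \<open>sigma = sum_{k<m} v k (x) f k.  Pairing (sigma, sigma) extended additively.\<close>
definition tpair :: "nat \<Rightarrow> nat \<Rightarrow> (nat \<Rightarrow> nat \<Rightarrow> complex) \<Rightarrow> (nat \<Rightarrow> falg) \<Rightarrow> falg" where
  "tpair n m v f = (\<Sum>k<m. \<Sum>l<m. scalar (herm n (v k) (v l)) * (dagger (f k) * f l))"

text \<open>Component i of sigma in U (x) M = M^n (standard basis).\<close>
definition tcomp :: "nat \<Rightarrow> (nat \<Rightarrow> nat \<Rightarrow> complex) \<Rightarrow> (nat \<Rightarrow> falg) \<Rightarrow> nat \<Rightarrow> falg" where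
  "tcomp m v f i = (\<Sum>k<m. scalar (v k i) * f k)"

end

theory Submission
  imports Defs "HOL-Computational_Algebra.Polynomial"
begin

lemma zero_word_Word: "(0::word) = Word []" by (simp add: zero_word_def)

lemma scalar_0[simp]: "scalar 0 = 0" by (simp add: scalar_def)
lemma scalar_1[simp]: "scalar 1 = 1" by (simp add: scalar_def)
lemma scalar_add: "scalar (a + b) = scalar a + scalar b" by (simp add: scalar_def single_add)
lemma scalar_mult: "scalar a * scalar b = scalar (a * b)" by (simp add: scalar_def mult_single)
lemma scalar_uminus: "scalar (- a) = - scalar a" by (simp add: scalar_def single_uminus)
lemma scalar_diff: "scalar (a - b) = scalar a - scalar b" by (simp add: scalar_def single_diff)
lemma scalar_sum: "scalar (\<Sum>i\<in>A. f i) = (\<Sum>i\<in>A. scalar (f i))"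
  by (induction A rule: infinite_finite_induct) (auto simp: scalar_add)

lemma update_eq_plus: "a \<notin> Poly_Mapping.keys f \<Longrightarrow> Poly_Mapping.update a b f = f + Poly_Mapping.single a b"
  by (rule poly_mapping_eqI) (auto simp: lookup_update lookup_add lookup_single in_keys_iff when_def not_in_keys_iff_lookup_eq_zero)

lemma falg_induct[case_names zero add]:
  assumes "P 0" and "\<And>f w c. P f \<Longrightarrow> P (f + Poly_Mapping.single w c)"
  shows "P f"
  by (induction f rule: update_induct) (auto simp: update_eq_plus assms)

lemma scalar_comm: "scalar c * (f::falg) = f * scalar c"
proof (induction f rule: falg_induct)
  case zero then show ?case by simp
next
  case (add f w d)
  have "scalar c * Poly_Mapping.single w d = Poly_Mapping.single w d * scalar c"
    by (simp add: scalar_def mult_single mult.commute)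
  then show ?case using add by (simp add: distrib_left distrib_right)
qed

lemma mult_scalar_right: "(f::falg) * (scalar c * g) = scalar c * (f * g)"
  by (metis mult.assoc scalar_comm)
lemma mult_scalar_assoc: "scalar c * (scalar d * (g::falg)) = scalar (c * d) * g"
  by (metis mult.assoc scalar_mult)

definition lin :: "('k \<Rightarrow> 'v::zero \<Rightarrow> 'r::comm_monoid_add) \<Rightarrow> ('k \<Rightarrow>\<^sub>0 'v) \<Rightarrow> 'r" where
  "lin h f = (\<Sum>k\<in>Poly_Mapping.keys f. h k (Poly_Mapping.lookup f k))"

lemma lin_superset:
  assumes "finite A" "Poly_Mapping.keys f \<subseteq> A" "\<And>k. h k 0 = 0"
  shows "lin h f = (\<Sum>k\<in>A. h k (Poly_Mapping.lookup f k))"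
  unfolding lin_def
  by (rule sum.mono_neutral_left) (use assms in \<open>auto simp: in_keys_iff\<close>)

lemma lin_zero[simp]: "lin h 0 = 0" by (simp add: lin_def)

lemma lin_add:
  assumes "\<And>k. h k 0 = 0" "\<And>k a b. h k (a + b) = h k a + h k b"
  shows "lin h (f + g) = lin h f + lin h g"
proof -
  let ?A = "Poly_Mapping.keys f \<union> Poly_Mapping.keys g"
  have "lin h (f + g) = (\<Sum>k\<in>?A. h k (Poly_Mapping.lookup (f + g) k))"
    by (rule lin_superset) (auto simp: assms keys_add)
  also have "\<dots> = (\<Sum>k\<in>?A. h k (Poly_Mapping.lookup f k)) + (\<Sum>k\<in>?A. h k (Poly_Mapping.lookup g k))"
    by (simp add: lookup_add assms sum.distrib)
  also have "\<dots> = lin h f + lin h g"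
    by (subst (1 2) lin_superset[where A = ?A]) (auto simp: assms)
  finally show ?thesis .
qed

lemma lin_single:
  assumes "h k 0 = 0"
  shows "lin h (Poly_Mapping.single k c) = h k c"
  using assms by (cases "c = 0") (auto simp: lin_def)


context fixes q :: real begin

abbreviation I where "I \<equiv> sl_ideal q"

lemma I_lmult: "a \<in> I \<Longrightarrow> x * a \<in> I"
  using sl_ideal.mult[of a q x 1] by simp
lemma I_rmult: "a \<in> I \<Longrightarrow> a * y \<in> I"
  using sl_ideal.mult[of a q 1 y] by simp
lemma I_scalar: "a \<in> I \<Longrightarrow> scalar c * a \<in> I" by (rule I_lmult)
lemma I_uminus: "a \<in> I \<Longrightarrow> - a \<in> I"
  using I_scalar[of a "-1"] by (simp add: scalar_uminus)
lemma I_add: "a \<in> I \<Longrightarrow> b \<in> I \<Longrightarrow> a + b \<in> I" by (rule sl_ideal.add)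
lemma I_diff: "a \<in> I \<Longrightarrow> b \<in> I \<Longrightarrow> a - b \<in> I"
  using I_add[OF _ I_uminus, of a b] by simp
lemma I_zero: "0 \<in> I" by (rule sl_ideal.zero)
lemma I_sum: "(\<And>i. i \<in> S \<Longrightarrow> f i \<in> I) \<Longrightarrow> (\<Sum>i\<in>S. f i) \<in> I"
  by (induction S rule: infinite_finite_induct) (auto intro: I_zero I_add)

definition cg :: "falg \<Rightarrow> falg \<Rightarrow> bool" where "cg a b \<longleftrightarrow> a - b \<in> I"

lemma cg_refl[simp]: "cg a a" by (simp add: cg_def I_zero)
lemma cg_sym: "cg a b \<Longrightarrow> cg b a"
  unfolding cg_def using I_uminus[of "a - b"] by simp
lemma cg_trans[trans]: "cg a b \<Longrightarrow> cg b c \<Longrightarrow> cg a c"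
proof -
  assume "cg a b" "cg b c"
  then have "(a - b) + (b - c) \<in> I" unfolding cg_def by (rule I_add)
  then show "cg a c" unfolding cg_def by simp
qed
lemma cg_eq_trans[trans]: "a = b \<Longrightarrow> cg b c \<Longrightarrow> cg a c" by simp
lemma cg_trans_eq[trans]: "cg a b \<Longrightarrow> b = c \<Longrightarrow> cg a c" by simp
lemma cg_add: "cg a b \<Longrightarrow> cg c d \<Longrightarrow> cg (a + c) (b + d)"
proof -
  assume "cg a b" "cg c d"
  then have "(a - b) + (c - d) \<in> I" unfolding cg_def by (rule I_add)
  moreover have "(a - b) + (c - d) = (a + c) - (b + d)" by (simp add: algebra_simps)
  ultimately show ?thesis unfolding cg_def by simp
qed
lemma cg_diff: "cg a b \<Longrightarrow> cg c d \<Longrightarrow> cg (a - c) (b - d)"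
proof -
  assume "cg a b" "cg c d"
  then have "(a - b) - (c - d) \<in> I" unfolding cg_def by (rule I_diff)
  moreover have "(a - b) - (c - d) = (a - c) - (b - d)" by (simp add: algebra_simps)
  ultimately show ?thesis unfolding cg_def by simp
qed
lemma cg_lmult: "cg a b \<Longrightarrow> cg (x * a) (x * b)"
  unfolding cg_def using I_lmult[of "a - b" x] by (simp add: right_diff_distrib)
lemma cg_rmult: "cg a b \<Longrightarrow> cg (a * y) (b * y)"
  unfolding cg_def using I_rmult[of "a - b" y] by (simp add: left_diff_distrib)
lemma cg_ctx: "cg a b \<Longrightarrow> cg (x * a * y) (x * b * y)"
  using cg_lmult cg_rmult by blast
lemma cg_scalar: "cg a b \<Longrightarrow> cg (scalar c * a) (scalar c * b)" by (rule cg_lmult)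
lemma cg_I: "cg a b \<Longrightarrow> b \<in> I \<Longrightarrow> a \<in> I"
  unfolding cg_def using I_add[of "a - b" b] by simp
lemma cg_zero_iff: "cg a 0 \<longleftrightarrow> a \<in> I" by (simp add: cg_def)

end

section \<open>Relations among the generators modulo the ideal\<close>

abbreviation "gA \<equiv> gen_el G11"
abbreviation "gB \<equiv> gen_el G12"
abbreviation "gC \<equiv> gen_el G21"
abbreviation "gE \<equiv> gen_el G22"
abbreviation "gD \<equiv> gen_el Dl"
abbreviation "gDi \<equiv> gen_el DlInv"

lemma gen_scalar: "gen_el g * (scalar c * h) = scalar c * (gen_el g * h)"
  by (rule mult_scalar_right)

lemmas falg_norm = mult.assoc gen_scalar mult_scalar_assoc

context fixes q :: real assumes qpos: "q > 0" begin

definition "qq = complex_of_real q"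
definition "qi = complex_of_real (1 / q)"

lemma qq_qi: "qq * qi = 1" "qi * qq = 1"
proof -
  have "qq * qi = complex_of_real (q * (1 / q))" by (simp only: qq_def qi_def of_real_mult)
  also have "\<dots> = 1" using qpos by simp
  finally show "qq * qi = 1" .
  then show "qi * qq = 1" by (simp add: mult.commute)
qed

lemma rel_in: "r \<in> sl_rels q \<Longrightarrow> r \<in> sl_ideal q" by (rule sl_ideal.rel)

lemma rels_I:
  "gA * gB - scalar qi * gB * gA \<in> sl_ideal q"
  "gA * gC - scalar qi * gC * gA \<in> sl_ideal q"
  "gB * gE - scalar qi * gE * gB \<in> sl_ideal q"
  "gC * gE - scalar qi * gE * gC \<in> sl_ideal q"
  "gB * gC - gC * gB \<in> sl_ideal q"
  "gA * gE - scalar qi * gB * gC - 1 \<in> sl_ideal q"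
  "gE * gA - scalar qq * gC * gB - 1 \<in> sl_ideal q"
  "gD * gDi - 1 \<in> sl_ideal q"
  "gDi * gD - 1 \<in> sl_ideal q"
  "gD * gA - gA * gD \<in> sl_ideal q"
  "gD * gB - scalar qq * gB * gD \<in> sl_ideal q"
  "gD * gC - scalar qi * gC * gD \<in> sl_ideal q"
  "gD * gE - gE * gD \<in> sl_ideal q"
  by (rule rel_in, unfold sl_rels_def Let_def qq_def qi_def, (rule insertI1 | rule insertI2)+)+

lemma R1: "cg q (gA * gB) (scalar qi * (gB * gA))"
  using rels_I(1) by (simp add: cg_def mult.assoc)
lemma R2: "cg q (gA * gC) (scalar qi * (gC * gA))"
  using rels_I(2) by (simp add: cg_def mult.assoc)
lemma R3: "cg q (gB * gE) (scalar qi * (gE * gB))"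
  using rels_I(3) by (simp add: cg_def mult.assoc)
lemma R4: "cg q (gC * gE) (scalar qi * (gE * gC))"
  using rels_I(4) by (simp add: cg_def mult.assoc)
lemma R5: "cg q (gB * gC) (gC * gB)"
  using rels_I(5) by (simp add: cg_def)
lemma R6: "cg q (gA * gE) (scalar qi * (gB * gC) + 1)"
  using rels_I(6) by (simp add: cg_def mult.assoc diff_diff_eq)
lemma R7: "cg q (gE * gA) (scalar qq * (gC * gB) + 1)"
  using rels_I(7) by (simp add: cg_def mult.assoc diff_diff_eq)
lemma R10: "cg q (gA * gD) (gD * gA)"
  using rels_I(10) cg_sym by (simp add: cg_def)
lemma R11: "cg q (gB * gD) (scalar qi * (gD * gB))"
proof -
  have "cg q (gD * gB) (scalar qq * (gB * gD))"
    using rels_I(11) by (simp add: cg_def mult.assoc)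
  then have "cg q (scalar qi * (gD * gB)) (scalar qi * (scalar qq * (gB * gD)))"
    by (rule cg_scalar)
  then show ?thesis using qq_qi by (simp add: mult_scalar_assoc cg_sym)
qed
lemma R12: "cg q (gC * gD) (scalar qq * (gD * gC))"
proof -
  have "cg q (gD * gC) (scalar qi * (gC * gD))"
    using rels_I(12) by (simp add: cg_def mult.assoc)
  then have "cg q (scalar qq * (gD * gC)) (scalar qq * (scalar qi * (gC * gD)))"
    by (rule cg_scalar)
  then show ?thesis using qq_qi by (simp add: mult_scalar_assoc cg_sym)
qed
lemma R13: "cg q (gE * gD) (gD * gE)"
  using rels_I(13) cg_sym by (simp add: cg_def)
lemma R4': "cg q (gE * gC) (scalar qq * (gC * gE))"
proof -
  have "cg q (scalar qq * (gC * gE)) (scalar qq * (scalar qi * (gE * gC)))"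
    by (rule cg_scalar[OF R4])
  then show ?thesis using qq_qi by (simp add: mult_scalar_assoc cg_sym)
qed

end

lemma cg_inv: "cg q a (scalar k * b) \<Longrightarrow> k' * k = 1 \<Longrightarrow> cg q b (scalar k' * a)"
proof -
  assume a: "cg q a (scalar k * b)" and k: "k' * k = 1"
  have "cg q (scalar k' * a) (scalar k' * (scalar k * b))" by (rule cg_scalar[OF a])
  also have "scalar k' * (scalar k * b) = b" using k by (simp add: mult_scalar_assoc)
  finally show ?thesis by (rule cg_sym)
qed

lemma aux0: "a + d - (b + d) + b - a = (0::'a::ab_group_add)" by simp

context fixes q :: real assumes qpos: "q > 0" begin

lemma W1: "cg q (gD*gA*gD*gB) (gD*gB*gD*gA)"
proof -
  have "gD*gA*gD*gB = gD*(gA*gD)*gB" by (simp add: mult.assoc)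
  also have "cg q \<dots> (gD*(gD*gA)*gB)" by (rule cg_ctx[OF R10[OF qpos]])
  also have "gD*(gD*gA)*gB = (gD*gD)*(gA*gB)*1" by (simp add: mult.assoc)
  also have "cg q \<dots> ((gD*gD)*(scalar (qi q)*(gB*gA))*1)" by (rule cg_ctx[OF R1[OF qpos]])
  also have "\<dots> = scalar (qi q) * (gD*gD*gB*gA)" by (simp add: falg_norm)
  finally have L: "cg q (gD*gA*gD*gB) (scalar (qi q) * (gD*gD*gB*gA))" .
  have "gD*gB*gD*gA = gD*(gB*gD)*gA" by (simp add: mult.assoc)
  also have "cg q \<dots> (gD*(scalar (qi q)*(gD*gB))*gA)" by (rule cg_ctx[OF R11[OF qpos]])
  also have "\<dots> = scalar (qi q) * (gD*gD*gB*gA)" by (simp add: falg_norm)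
  finally have R: "cg q (gD*gB*gD*gA) (scalar (qi q) * (gD*gD*gB*gA))" .
  show ?thesis using L cg_sym[OF R] by (rule cg_trans)
qed

lemma W2: "cg q (gD*gC*gD*gE) (gD*gE*gD*gC)"
proof -
  have "gD*gC*gD*gE = gD*(gC*gD)*gE" by (simp add: mult.assoc)
  also have "cg q \<dots> (gD*(scalar (qq q)*(gD*gC))*gE)" by (rule cg_ctx[OF R12[OF qpos]])
  also have "\<dots> = scalar (qq q) * (gD*gD*gC*gE)" by (simp add: falg_norm)
  finally have L: "cg q (gD*gC*gD*gE) (scalar (qq q) * (gD*gD*gC*gE))" .
  have "gD*gE*gD*gC = gD*(gE*gD)*gC" by (simp add: mult.assoc)
  also have "cg q \<dots> (gD*(gD*gE)*gC)" by (rule cg_ctx[OF R13[OF qpos]])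
  also have "gD*(gD*gE)*gC = (gD*gD)*(gE*gC)*1" by (simp add: mult.assoc)
  also have "cg q \<dots> ((gD*gD)*(scalar (qq q)*(gC*gE))*1)" by (rule cg_ctx[OF R4'[OF qpos]])
  also have "\<dots> = scalar (qq q) * (gD*gD*gC*gE)" by (simp add: falg_norm)
  finally have R: "cg q (gD*gE*gD*gC) (scalar (qq q) * (gD*gD*gC*gE))" .
  show ?thesis using L cg_sym[OF R] by (rule cg_trans)
qed

lemma W3: "cg q (gD*gA*gD*gC) (scalar (qi q * qi q) * (gD*gC*gD*gA))"
proof -
  have "gD*gA*gD*gC = gD*(gA*gD)*gC" by (simp add: mult.assoc)
  also have "cg q \<dots> (gD*(gD*gA)*gC)" by (rule cg_ctx[OF R10[OF qpos]])
  also have "gD*(gD*gA)*gC = (gD*gD)*(gA*gC)*1" by (simp add: mult.assoc)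
  also have "cg q \<dots> ((gD*gD)*(scalar (qi q)*(gC*gA))*1)" by (rule cg_ctx[OF R2[OF qpos]])
  also have "\<dots> = scalar (qi q) * (gD*gD*gC*gA)" by (simp add: falg_norm)
  finally have L: "cg q (gD*gA*gD*gC) (scalar (qi q) * (gD*gD*gC*gA))" .
  have "gD*gC*gD*gA = gD*(gC*gD)*gA" by (simp add: mult.assoc)
  also have "cg q \<dots> (gD*(scalar (qq q)*(gD*gC))*gA)" by (rule cg_ctx[OF R12[OF qpos]])
  also have "\<dots> = scalar (qq q) * (gD*gD*gC*gA)" by (simp add: falg_norm)
  finally have R: "cg q (gD*gC*gD*gA) (scalar (qq q) * (gD*gD*gC*gA))" .
  have R': "cg q (gD*gD*gC*gA) (scalar (qi q) * (gD*gC*gD*gA))"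
    by (rule cg_inv[OF R]) (simp add: qq_qi[OF qpos])
  have "cg q (scalar (qi q) * (gD*gD*gC*gA)) (scalar (qi q) * (scalar (qi q) * (gD*gC*gD*gA)))"
    by (rule cg_scalar[OF R'])
  then have "cg q (scalar (qi q) * (gD*gD*gC*gA)) (scalar (qi q * qi q) * (gD*gC*gD*gA))"
    by (simp add: mult_scalar_assoc)
  with L show ?thesis by (rule cg_trans)
qed

lemma W4: "cg q (gD*gB*gD*gE) (scalar (qi q * qi q) * (gD*gE*gD*gB))"
proof -
  have "gD*gB*gD*gE = gD*(gB*gD)*gE" by (simp add: mult.assoc)
  also have "cg q \<dots> (gD*(scalar (qi q)*(gD*gB))*gE)" by (rule cg_ctx[OF R11[OF qpos]])
  also have "\<dots> = scalar (qi q) * ((gD*gD)*(gB*gE)*1)" by (simp add: falg_norm)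
  also have "cg q \<dots> (scalar (qi q) * ((gD*gD)*(scalar (qi q)*(gE*gB))*1))"
    by (rule cg_scalar[OF cg_ctx[OF R3[OF qpos]]])
  also have "\<dots> = scalar (qi q * qi q) * (gD*(gD*gE)*gB)" by (simp add: falg_norm)
  also have "cg q \<dots> (scalar (qi q * qi q) * (gD*(gE*gD)*gB))"
    by (rule cg_scalar[OF cg_ctx[OF cg_sym[OF R13[OF qpos]]]])
  also have "\<dots> = scalar (qi q * qi q) * (gD*gE*gD*gB)" by (simp add: mult.assoc)
  finally show ?thesis .
qed

lemma W5a: "cg q (gD*gC*gD*gB) (scalar (qq q) * (gD*gD*gC*gB))"
proof -
  have "gD*gC*gD*gB = gD*(gC*gD)*gB" by (simp add: mult.assoc)
  also have "cg q \<dots> (gD*(scalar (qq q)*(gD*gC))*gB)" by (rule cg_ctx[OF R12[OF qpos]])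
  also have "\<dots> = scalar (qq q) * (gD*gD*gC*gB)" by (simp add: falg_norm)
  finally show ?thesis .
qed

lemma W5b: "cg q (gD*gB*gD*gC) (scalar (qi q) * (gD*gD*gC*gB))"
proof -
  have "gD*gB*gD*gC = gD*(gB*gD)*gC" by (simp add: mult.assoc)
  also have "cg q \<dots> (gD*(scalar (qi q)*(gD*gB))*gC)" by (rule cg_ctx[OF R11[OF qpos]])
  also have "\<dots> = scalar (qi q) * ((gD*gD)*(gB*gC)*1)" by (simp add: falg_norm)
  also have "cg q \<dots> (scalar (qi q) * ((gD*gD)*(gC*gB)*1))"
    by (rule cg_scalar[OF cg_ctx[OF R5[OF qpos]]])
  also have "\<dots> = scalar (qi q) * (gD*gD*gC*gB)" by (simp add: mult.assoc)
  finally show ?thesis .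
qed

lemma W5: "cg q (gD*gC*gD*gB) (scalar (qq q * qq q) * (gD*gB*gD*gC))"
proof -
  have R': "cg q (gD*gD*gC*gB) (scalar (qq q) * (gD*gB*gD*gC))"
    by (rule cg_inv[OF W5b]) (simp add: qq_qi[OF qpos])
  have "cg q (scalar (qq q) * (gD*gD*gC*gB)) (scalar (qq q) * (scalar (qq q) * (gD*gB*gD*gC)))"
    by (rule cg_scalar[OF R'])
  then have "cg q (scalar (qq q) * (gD*gD*gC*gB)) (scalar (qq q * qq q) * (gD*gB*gD*gC))"
    by (simp add: mult_scalar_assoc)
  with W5a show ?thesis by (rule cg_trans)
qed

lemma W6: "cg q (gD*gA*gD*gE - gD*gE*gD*gA + gD*gC*gD*gB - gD*gB*gD*gC) 0"
proof -
  have "gD*gA*gD*gE = gD*(gA*gD)*gE" by (simp add: mult.assoc)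
  also have "cg q \<dots> (gD*(gD*gA)*gE)" by (rule cg_ctx[OF R10[OF qpos]])
  also have "gD*(gD*gA)*gE = (gD*gD)*(gA*gE)*1" by (simp add: mult.assoc)
  also have "cg q \<dots> ((gD*gD)*(scalar (qi q)*(gB*gC) + 1)*1)" by (rule cg_ctx[OF R6[OF qpos]])
  also have "\<dots> = scalar (qi q) * ((gD*gD)*(gB*gC)*1) + gD*gD" by (simp add: falg_norm distrib_left)
  also have "cg q \<dots> (scalar (qi q) * ((gD*gD)*(gC*gB)*1) + gD*gD)"
    by (rule cg_add[OF cg_scalar[OF cg_ctx[OF R5[OF qpos]]] cg_refl])
  finally have a1: "cg q (gD*gA*gD*gE) (scalar (qi q) * ((gD*gD)*(gC*gB)*1) + gD*gD)" .
  have "gD*gE*gD*gA = gD*(gE*gD)*gA" by (simp add: mult.assoc)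
  also have "cg q \<dots> (gD*(gD*gE)*gA)" by (rule cg_ctx[OF R13[OF qpos]])
  also have "gD*(gD*gE)*gA = (gD*gD)*(gE*gA)*1" by (simp add: mult.assoc)
  also have "cg q \<dots> ((gD*gD)*(scalar (qq q)*(gC*gB) + 1)*1)" by (rule cg_ctx[OF R7[OF qpos]])
  also have "\<dots> = scalar (qq q) * ((gD*gD)*(gC*gB)*1) + gD*gD" by (simp add: falg_norm distrib_left)
  finally have a2: "cg q (gD*gE*gD*gA) (scalar (qq q) * ((gD*gD)*(gC*gB)*1) + gD*gD)" .
  have a3: "cg q (gD*gC*gD*gB) (scalar (qq q) * ((gD*gD)*(gC*gB)*1))"
    using W5a by (simp add: mult.assoc)
  have a4: "cg q (gD*gB*gD*gC) (scalar (qi q) * ((gD*gD)*(gC*gB)*1))"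
    using W5b by (simp add: mult.assoc)
  have "cg q (gD*gA*gD*gE - gD*gE*gD*gA + gD*gC*gD*gB - gD*gB*gD*gC)
     (scalar (qi q) * ((gD*gD)*(gC*gB)*1) + gD*gD - (scalar (qq q) * ((gD*gD)*(gC*gB)*1) + gD*gD)
      + scalar (qq q) * ((gD*gD)*(gC*gB)*1) - scalar (qi q) * ((gD*gD)*(gC*gB)*1))"
    by (rule cg_diff[OF cg_add[OF cg_diff[OF a1 a2] a3] a4])
  also have "\<dots> = 0" by (rule aux0)
  finally show ?thesis .
qed


definition "cs = complex_of_real (1 / sqrt q)"
definition "ct = complex_of_real (sqrt q)"

lemma cs_ct: "ct * cs = 1" "cs * ct = 1"
proof -
  have "ct * cs = complex_of_real (sqrt q * (1 / sqrt q))" by (simp only: cs_def ct_def of_real_mult)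
  also have "\<dots> = 1" using qpos by simp
  finally show "ct * cs = 1" .
  then show "cs * ct = 1" by (simp add: mult.commute)
qed

lemma x_defs: "x11 q = gD * gA" "x12 q = scalar cs * gD * gB" "x21 q = scalar ct * gD * gC" "x22 q = gD * gE"
  by (simp_all add: x11_def x12_def x21_def x22_def cs_def ct_def)

lemma qqqi2: "(qq q * qq q) * (qi q * qi q) = 1" "(qi q * qi q) * (qq q * qq q) = 1"
  using qq_qi[OF qpos] by (simp_all add: algebra_simps)

lemma xm1: "cg q (x12 q * x11 q) (x11 q * x12 q)"
  using cg_scalar[OF cg_sym[OF W1], of cs] by (simp add: x_defs falg_norm)
lemma xm2: "cg q (x22 q * x21 q) (x21 q * x22 q)"
  using cg_scalar[OF cg_sym[OF W2], of ct] by (simp add: x_defs falg_norm)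
lemma xm3: "cg q (x21 q * x11 q) (scalar (qq q * qq q) * (x11 q * x21 q))"
  using cg_scalar[OF cg_inv[OF W3 qqqi2(1)], of ct] by (simp add: x_defs falg_norm mult.commute)
lemma xm3': "cg q (x11 q * x21 q) (scalar (qi q * qi q) * (x21 q * x11 q))"
  using cg_scalar[OF W3, of ct] by (simp add: x_defs falg_norm mult.commute)
lemma xm4: "cg q (x22 q * x12 q) (scalar (qq q * qq q) * (x12 q * x22 q))"
  using cg_scalar[OF cg_inv[OF W4 qqqi2(1)], of cs] by (simp add: x_defs falg_norm mult.commute)
lemma xm4': "cg q (x12 q * x22 q) (scalar (qi q * qi q) * (x22 q * x12 q))"
  using cg_scalar[OF W4, of cs] by (simp add: x_defs falg_norm mult.commute)
lemma xm5: "cg q (x21 q * x12 q) (scalar (qq q * qq q) * (x12 q * x21 q))"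
  using cg_scalar[OF W5, of "ct * cs"] by (simp add: x_defs falg_norm mult.commute)
lemma xm5': "cg q (x12 q * x21 q) (scalar (qi q * qi q) * (x21 q * x12 q))"
  using cg_inv[OF xm5 qqqi2(2)] .
lemma xm6: "cg q (x11 q * x22 q - x22 q * x11 q + x21 q * x12 q - x12 q * x21 q) 0"
  using W6 by (simp add: x_defs falg_norm cs_ct mult.assoc)

lemma aux1: "(b::'a::ab_group_add) = a + c - d - (a - b + c - d)" by simp
lemma aux2: "(a::'a::ab_group_add) = b - c + d + (a - b + c - d)" by simp

lemma xm6a: "cg q (x22 q * x11 q) (x11 q * x22 q + scalar (qq q * qq q - 1) * (x12 q * x21 q))"
proof -
  let ?Z = "x11 q * x22 q - x22 q * x11 q + x21 q * x12 q - x12 q * x21 q"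
  have "x22 q * x11 q = x11 q * x22 q + x21 q * x12 q - x12 q * x21 q - ?Z" by (rule aux1)
  also have "cg q \<dots> (x11 q * x22 q + scalar (qq q * qq q) * (x12 q * x21 q) - x12 q * x21 q - 0)"
    by (rule cg_diff[OF cg_diff[OF cg_add[OF cg_refl[of q "x11 q * x22 q"] xm5] cg_refl[of q "x12 q * x21 q"]] xm6])
  also have "\<dots> = x11 q * x22 q + scalar (qq q * qq q - 1) * (x12 q * x21 q)"
    by (simp add: scalar_diff left_diff_distrib add_diff_eq)
  finally show ?thesis .
qed

lemma xm6b: "cg q (x11 q * x22 q) (x22 q * x11 q + scalar (qi q * qi q - 1) * (x21 q * x12 q))"
proof -
  let ?Z = "x11 q * x22 q - x22 q * x11 q + x21 q * x12 q - x12 q * x21 q"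
  have "x11 q * x22 q = x22 q * x11 q - x21 q * x12 q + x12 q * x21 q + ?Z" by (rule aux2)
  also have "cg q \<dots> (x22 q * x11 q - x21 q * x12 q + scalar (qi q * qi q) * (x21 q * x12 q) + 0)"
    by (rule cg_add[OF cg_add[OF cg_refl[of q "x22 q * x11 q - x21 q * x12 q"] xm5'] xm6])
  also have "\<dots> = x22 q * x11 q + scalar (qi q * qi q - 1) * (x21 q * x12 q)"
    by (simp add: scalar_diff left_diff_distrib diff_add_eq)
  finally show ?thesis .
qed

end

section \<open>Spanning by ordered monomials\<close>

definition mono4 :: "falg \<Rightarrow> falg \<Rightarrow> falg \<Rightarrow> falg \<Rightarrow> nat \<times> nat \<times> nat \<times> nat \<Rightarrow> falg" where
  "mono4 X1 X2 X3 X4 al = (case al of (a, b, c, d) \<Rightarrow> X1 ^ a * X2 ^ b * X3 ^ c * X4 ^ d)"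

definition lsum4 :: "falg \<Rightarrow> falg \<Rightarrow> falg \<Rightarrow> falg \<Rightarrow> (nat \<times> nat \<times> nat \<times> nat \<Rightarrow>\<^sub>0 complex) \<Rightarrow> falg" where
  "lsum4 X1 X2 X3 X4 C = lin (\<lambda>al c. scalar c * mono4 X1 X2 X3 X4 al) C"

lemma lsum4_add: "lsum4 X1 X2 X3 X4 (C + D) = lsum4 X1 X2 X3 X4 C + lsum4 X1 X2 X3 X4 D"
  unfolding lsum4_def by (rule lin_add) (simp_all add: scalar_add distrib_right)

lemma lsum4_single: "lsum4 X1 X2 X3 X4 (Poly_Mapping.single al c) = scalar c * mono4 X1 X2 X3 X4 al"
  unfolding lsum4_def by (rule lin_single) simp

lemma lsum4_zero[simp]: "lsum4 X1 X2 X3 X4 0 = 0"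
  unfolding lsum4_def by simp

definition Sp4 :: "real \<Rightarrow> falg \<Rightarrow> falg \<Rightarrow> falg \<Rightarrow> falg \<Rightarrow> falg set" where
  "Sp4 q X1 X2 X3 X4 = {f. \<exists>C. cg q f (lsum4 X1 X2 X3 X4 C)}"

context
  fixes q :: real and X1 X2 X3 X4 :: falg and k :: complex
begin

abbreviation "mn \<equiv> mono4 X1 X2 X3 X4"
abbreviation "SS \<equiv> Sp4 q X1 X2 X3 X4"

lemma Sp_cg: "cg q f g \<Longrightarrow> g \<in> SS \<Longrightarrow> f \<in> SS"
  unfolding Sp4_def using cg_trans by blast

lemma Sp_zero: "0 \<in> SS"
  unfolding Sp4_def by (rule CollectI, rule exI[of _ 0]) simp

lemma Sp_add: "f \<in> SS \<Longrightarrow> g \<in> SS \<Longrightarrow> f + g \<in> SS"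
proof -
  assume "f \<in> SS" "g \<in> SS"
  then obtain C D where "cg q f (lsum4 X1 X2 X3 X4 C)" "cg q g (lsum4 X1 X2 X3 X4 D)"
    unfolding Sp4_def by blast
  then have "cg q (f + g) (lsum4 X1 X2 X3 X4 (C + D))" using cg_add lsum4_add by metis
  then show ?thesis unfolding Sp4_def by blast
qed

lemma Sp_mono: "scalar c * mn al \<in> SS"
  unfolding Sp4_def by (rule CollectI, rule exI[of _ "Poly_Mapping.single al c"]) (simp add: lsum4_single)

lemma Sp_sum: "(\<And>i. i \<in> A \<Longrightarrow> f i \<in> SS) \<Longrightarrow> (\<Sum>i\<in>A. f i) \<in> SS"
  by (induction A rule: infinite_finite_induct) (auto intro: Sp_zero Sp_add)

lemma lsum4_eq: "lsum4 X1 X2 X3 X4 C = (\<Sum>al\<in>Poly_Mapping.keys C. scalar (Poly_Mapping.lookup C al) * mn al)"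
  by (simp add: lsum4_def lin_def)

lemma Sp_scalar: "f \<in> SS \<Longrightarrow> scalar c * f \<in> SS"
proof -
  assume "f \<in> SS"
  then obtain C where C: "cg q f (lsum4 X1 X2 X3 X4 C)" unfolding Sp4_def by blast
  have "cg q (scalar c * f) (scalar c * lsum4 X1 X2 X3 X4 C)" by (rule cg_scalar[OF C])
  moreover have "scalar c * lsum4 X1 X2 X3 X4 C
      = (\<Sum>al\<in>Poly_Mapping.keys C. scalar (c * Poly_Mapping.lookup C al) * mn al)"
    by (simp add: lsum4_eq sum_distrib_left mult_scalar_assoc)
  moreover have "\<dots> \<in> SS" by (rule Sp_sum, rule Sp_mono)
  ultimately show ?thesis using Sp_cg by simp
qed

lemma Sp_lmult:
  assumes "\<And>al. X * mn al \<in> SS" and "f \<in> SS"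
  shows "X * f \<in> SS"
proof -
  obtain C where C: "cg q f (lsum4 X1 X2 X3 X4 C)" using assms(2) unfolding Sp4_def by blast
  have "cg q (X * f) (X * lsum4 X1 X2 X3 X4 C)" by (rule cg_lmult[OF C])
  moreover have "X * lsum4 X1 X2 X3 X4 C
      = (\<Sum>al\<in>Poly_Mapping.keys C. scalar (Poly_Mapping.lookup C al) * (X * mn al))"
    by (simp add: lsum4_eq sum_distrib_left mult_scalar_right[of X])
  moreover have "\<dots> \<in> SS" by (rule Sp_sum, rule Sp_scalar, rule assms(1))
  ultimately show ?thesis using Sp_cg by simp
qed

lemma comm_pow:
  assumes "cg q (Y * X) (scalar c * (X * Y))"
  shows "cg q (Y * X ^ n) (scalar (c ^ n) * (X ^ n * Y))"
proof (induction n)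
  case 0 then show ?case by simp
next
  case (Suc n)
  have "Y * X ^ Suc n = (Y * X) * X ^ n" by (simp add: mult.assoc)
  also have "cg q \<dots> ((scalar c * (X * Y)) * X ^ n)" by (rule cg_rmult[OF assms])
  also have "\<dots> = scalar c * (X * (Y * X ^ n))" by (simp add: mult.assoc)
  also have "cg q \<dots> (scalar c * (X * (scalar (c ^ n) * (X ^ n * Y))))"
    by (rule cg_scalar[OF cg_lmult[OF Suc.IH]])
  also have "\<dots> = scalar (c ^ Suc n) * (X ^ Suc n * Y)"
    by (simp add: mult_scalar_right[of X] mult_scalar_assoc mult.assoc)
  finally show ?case .
qed

context
  assumes H1: "cg q (X2 * X1) (X1 * X2)"
    and H2: "cg q (X4 * X3) (X3 * X4)"
    and H3: "cg q (X3 * X1) (scalar k * (X1 * X3))"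
    and H4: "cg q (X4 * X2) (scalar k * (X2 * X4))"
    and H5: "cg q (X3 * X2) (scalar k * (X2 * X3))"
    and H6: "cg q (X4 * X1) (X1 * X4 + scalar (k - 1) * (X2 * X3))"
begin

lemma Sp_mn: "mn al \<in> SS"
  using Sp_mono[of 1] by simp

lemma Sp_one: "1 \<in> SS"
  using Sp_mn[of "(0,0,0,0)"] by (simp add: mono4_def)

lemma L1: "X1 * mn al \<in> SS"
proof -
  obtain a b c d where al: "al = (a,b,c,d)" by (cases al) auto
  have "X1 * mn al = mn (Suc a, b, c, d)" by (simp add: al mono4_def mult.assoc)
  then show ?thesis using Sp_mn by simp
qed

lemma L2: "X2 * mn al \<in> SS"
proof -
  obtain a b c d where al: "al = (a,b,c,d)" by (cases al) auto
  have H1': "cg q (X2 * X1) (scalar 1 * (X1 * X2))" using H1 by simp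
  have "X2 * mn al = (X2 * X1 ^ a) * (X2 ^ b * X3 ^ c * X4 ^ d)" by (simp add: al mono4_def mult.assoc)
  also have "cg q \<dots> ((scalar (1 ^ a) * (X1 ^ a * X2)) * (X2 ^ b * X3 ^ c * X4 ^ d))"
    by (rule cg_rmult[OF comm_pow[OF H1']])
  also have "\<dots> = mn (a, Suc b, c, d)" by (simp add: mono4_def mult.assoc)
  finally show ?thesis using Sp_cg Sp_mn by blast
qed

lemma L3: "X3 * mn al \<in> SS"
proof -
  obtain a b c d where al: "al = (a,b,c,d)" by (cases al) auto
  have "X3 * mn al = (X3 * X1 ^ a) * (X2 ^ b * X3 ^ c * X4 ^ d)" by (simp add: al mono4_def mult.assoc)
  also have "cg q \<dots> ((scalar (k ^ a) * (X1 ^ a * X3)) * (X2 ^ b * X3 ^ c * X4 ^ d))"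
    by (rule cg_rmult[OF comm_pow[OF H3]])
  also have "\<dots> = scalar (k ^ a) * (X1 ^ a * (X3 * X2 ^ b) * (X3 ^ c * X4 ^ d))"
    by (simp add: mult.assoc)
  also have "cg q \<dots> (scalar (k ^ a) * (X1 ^ a * (scalar (k ^ b) * (X2 ^ b * X3)) * (X3 ^ c * X4 ^ d)))"
    by (rule cg_scalar[OF cg_ctx[OF comm_pow[OF H5]]])
  also have "\<dots> = scalar (k ^ a * k ^ b) * mn (a, b, Suc c, d)"
    by (simp add: mono4_def mult.assoc mult_scalar_right[of "X1 ^ a"] mult_scalar_assoc)
  finally show ?thesis using Sp_cg Sp_mono by blast
qed

lemma L4a: "X4 * mn (0, b, c, d) \<in> SS"
proof -
  have H2': "cg q (X4 * X3) (scalar 1 * (X3 * X4))" using H2 by simp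
  have "X4 * mn (0, b, c, d) = (X4 * X2 ^ b) * (X3 ^ c * X4 ^ d)" by (simp add: mono4_def mult.assoc)
  also have "cg q \<dots> ((scalar (k ^ b) * (X2 ^ b * X4)) * (X3 ^ c * X4 ^ d))"
    by (rule cg_rmult[OF comm_pow[OF H4]])
  also have "\<dots> = scalar (k ^ b) * (X2 ^ b * (X4 * X3 ^ c) * X4 ^ d)"
    by (simp add: mult.assoc)
  also have "cg q \<dots> (scalar (k ^ b) * (X2 ^ b * (scalar (1 ^ c) * (X3 ^ c * X4)) * X4 ^ d))"
    by (rule cg_scalar[OF cg_ctx[OF comm_pow[OF H2']]])
  also have "\<dots> = scalar (k ^ b) * mn (0, b, c, Suc d)"
    by (simp add: mono4_def mult.assoc)
  finally show ?thesis using Sp_cg Sp_mono by blast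
qed

lemma L1S: "f \<in> SS \<Longrightarrow> X1 * f \<in> SS" by (rule Sp_lmult[OF L1])
lemma L2S: "f \<in> SS \<Longrightarrow> X2 * f \<in> SS" by (rule Sp_lmult[OF L2])
lemma L3S: "f \<in> SS \<Longrightarrow> X3 * f \<in> SS" by (rule Sp_lmult[OF L3])

lemma L4: "X4 * mn (a, b, c, d) \<in> SS"
proof (induction a arbitrary: b c d)
  case 0 then show ?case by (rule L4a)
next
  case (Suc a)
  have "X4 * mn (Suc a, b, c, d) = (X4 * X1) * mn (a, b, c, d)" by (simp add: mono4_def mult.assoc)
  also have "cg q \<dots> ((X1 * X4 + scalar (k - 1) * (X2 * X3)) * mn (a, b, c, d))"
    by (rule cg_rmult[OF H6])
  also have "\<dots> = X1 * (X4 * mn (a, b, c, d)) + scalar (k - 1) * (X2 * (X3 * mn (a, b, c, d)))"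
    by (simp add: distrib_right mult.assoc)
  finally have e: "cg q (X4 * mn (Suc a, b, c, d)) \<dots>" .
  have "X1 * (X4 * mn (a, b, c, d)) + scalar (k - 1) * (X2 * (X3 * mn (a, b, c, d))) \<in> SS"
    by (intro Sp_add L1S Sp_scalar L2S L3 Suc.IH)
  then show ?case using e Sp_cg by blast
qed

lemma L4S: "f \<in> SS \<Longrightarrow> X4 * f \<in> SS"
proof (rule Sp_lmult)
  fix al show "X4 * mn al \<in> SS" using L4 by (cases al) auto
qed

end
end

lemma mink_span_gen:
  fixes q :: real and X1 X2 X3 X4 :: falg and k :: complex
  assumes H1: "cg q (X2 * X1) (X1 * X2)"
    and H2: "cg q (X4 * X3) (X3 * X4)"
    and H3: "cg q (X3 * X1) (scalar k * (X1 * X3))"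
    and H4: "cg q (X4 * X2) (scalar k * (X2 * X4))"
    and H5: "cg q (X3 * X2) (scalar k * (X2 * X3))"
    and H6: "cg q (X4 * X1) (X1 * X4 + scalar (k - 1) * (X2 * X3))"
    and gens: "{x11 q, x12 q, x21 q, x22 q} = {X1, X2, X3, X4}"
    and a: "a \<in> minkowski q"
  shows "a \<in> Sp4 q X1 X2 X3 X4"
proof -
  have gen: "X * g \<in> Sp4 q X1 X2 X3 X4" if "X \<in> {X1, X2, X3, X4}" "g \<in> Sp4 q X1 X2 X3 X4" for X g
    using that L1S[OF H1 H2 H3 H4 H5 H6] L2S[OF H1 H2 H3 H4 H5 H6]
      L3S[OF H1 H2 H3 H4 H5 H6] L4S[OF H1 H2 H3 H4 H5 H6] by blast
  have "\<forall>g\<in>Sp4 q X1 X2 X3 X4. a * g \<in> Sp4 q X1 X2 X3 X4"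
    using a
  proof (induction rule: minkowski.induct)
    case (scal c) then show ?case using Sp_scalar by blast
  next
    case gx11 then show ?case using gen gens by blast
  next
    case gx12 then show ?case using gen gens by blast
  next
    case gx21 then show ?case using gen gens by blast
  next
    case gx22 then show ?case using gen gens by blast
  next
    case (add a b) then show ?case using Sp_add by (simp add: distrib_right)
  next
    case (mult a b) then show ?case by (simp add: mult.assoc)
  qed
  then show ?thesis using Sp_one[OF H1 H2 H3 H4 H5 H6] by fastforce
qed

context fixes q :: real assumes qpos: "q > 0" begin

lemma span_fwd: "a \<in> minkowski q \<Longrightarrow> a \<in> Sp4 q (x11 q) (x12 q) (x21 q) (x22 q)"
  by (rule mink_span_gen[OF xm1[OF qpos] xm2[OF qpos] xm3[OF qpos] xm4[OF qpos] xm5[OF qpos] xm6a[OF qpos]]) auto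

lemma span_rev: "a \<in> minkowski q \<Longrightarrow> a \<in> Sp4 q (x22 q) (x21 q) (x12 q) (x11 q)"
  by (rule mink_span_gen[OF cg_sym[OF xm2[OF qpos]] cg_sym[OF xm1[OF qpos]] xm4'[OF qpos] xm3'[OF qpos] xm5'[OF qpos] xm6b[OF qpos]]) auto

end

section \<open>Representations by weighted translations\<close>

type_synonym pt = "int \<times> int"

fun vl :: "(gen \<Rightarrow> pt) \<Rightarrow> gen list \<Rightarrow> pt" where
  "vl v [] = 0"
| "vl v (g # l) = v g + vl v l"

fun wl :: "(gen \<Rightarrow> pt) \<Rightarrow> (gen \<Rightarrow> pt \<Rightarrow> complex) \<Rightarrow> gen list \<Rightarrow> pt \<Rightarrow> complex" where
  "wl v w [] x = 1"
| "wl v w (g # l) x = w g (x + vl v l) * wl v w l x"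

fun vw :: "(gen \<Rightarrow> pt) \<Rightarrow> word \<Rightarrow> pt" where
  "vw v (Word l) = vl v l"

fun ww :: "(gen \<Rightarrow> pt) \<Rightarrow> (gen \<Rightarrow> pt \<Rightarrow> complex) \<Rightarrow> word \<Rightarrow> pt \<Rightarrow> complex" where
  "ww v w (Word l) x = wl v w l x"

definition ent :: "(gen \<Rightarrow> pt) \<Rightarrow> (gen \<Rightarrow> pt \<Rightarrow> complex) \<Rightarrow> word \<Rightarrow> pt \<Rightarrow> pt \<Rightarrow> complex" where
  "ent v w u y x = (if y = x + vw v u then ww v w u x else 0)"

definition E :: "(gen \<Rightarrow> pt) \<Rightarrow> (gen \<Rightarrow> pt \<Rightarrow> complex) \<Rightarrow> falg \<Rightarrow> pt \<Rightarrow> pt \<Rightarrow> complex" where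
  "E v w f y x = lin (\<lambda>u c. c * ent v w u y x) f"

context fixes v :: "gen \<Rightarrow> pt" and w :: "gen \<Rightarrow> pt \<Rightarrow> complex" begin

lemma vl_append: "vl v (a @ b) = vl v a + vl v b"
  by (induction a) (auto simp: add.assoc)

lemma wl_append: "wl v w (a @ b) x = wl v w a (x + vl v b) * wl v w b x"
  by (induction a) (auto simp: vl_append add.assoc add.commute add.left_commute)

lemma vw_plus: "vw v (u + u') = vw v u + vw v u'"
  by (cases u; cases u') (simp add: vl_append)

lemma ww_plus: "ww v w (u + u') x = ww v w u (x + vw v u') * ww v w u' x"
  by (cases u; cases u') (simp add: wl_append)

lemma vw_zero[simp]: "vw v 0 = 0" by (simp add: zero_word_Word)
lemma ww_zero[simp]: "ww v w 0 x = 1" by (simp add: zero_word_Word)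

lemma E_zero[simp]: "E v w 0 y x = 0" by (simp add: E_def)

lemma E_add: "E v w (f + g) y x = E v w f y x + E v w g y x"
  unfolding E_def by (rule lin_add) (simp_all add: distrib_right)

lemma E_single: "E v w (Poly_Mapping.single u c) y x = c * ent v w u y x"
  unfolding E_def by (rule lin_single) simp

lemma E_uminus: "E v w (- f) y x = - E v w f y x"
  using E_add[of f "- f" y x] by (simp add: eq_neg_iff_add_eq_0 add.commute)

lemma E_diff: "E v w (f - g) y x = E v w f y x - E v w g y x"
  using E_add[of f "- g"] E_uminus[of g] by simp

lemma E_sum: "E v w (\<Sum>i\<in>A. f i) y x = (\<Sum>i\<in>A. E v w (f i) y x)"
  by (induction A rule: infinite_finite_induct) (auto simp: E_add)

lemma E_single_mult:
  "E v w (Poly_Mapping.single u c * g) y x = c * ww v w u (y - vw v u) * E v w g (y - vw v u) x"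
proof (induction g rule: falg_induct)
  case zero then show ?case by simp
next
  case (add g u' c')
  have "E v w (Poly_Mapping.single u c * Poly_Mapping.single u' c') y x
      = c * ww v w u (y - vw v u) * E v w (Poly_Mapping.single u' c') (y - vw v u) x"
  proof -
    have e: "(y = x + vw v (u + u')) \<longleftrightarrow> (y - vw v u = x + vw v u')"
      by (auto simp: vw_plus algebra_simps)
    have "y = x + vw v (u + u') \<Longrightarrow> x + vw v u' = y - vw v u"
      by (simp add: vw_plus algebra_simps)
    then show ?thesis
      by (auto simp: mult_single E_single ent_def e ww_plus)
  qed
  then show ?case using add by (simp add: distrib_left E_add algebra_simps)
qed

definition colset :: "falg \<Rightarrow> pt \<Rightarrow> pt set" where
  "colset g x = (\<lambda>u. x + vw v u) ` Poly_Mapping.keys g"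

lemma finite_colset: "finite (colset g x)" by (simp add: colset_def)

lemma E_colset: "E v w g z x \<noteq> 0 \<Longrightarrow> z \<in> colset g x"
proof -
  assume "E v w g z x \<noteq> 0"
  then have "(\<Sum>u\<in>Poly_Mapping.keys g. Poly_Mapping.lookup g u * ent v w u z x) \<noteq> 0"
    by (simp add: E_def lin_def)
  then obtain u where "u \<in> Poly_Mapping.keys g" "ent v w u z x \<noteq> 0"
    by (metis (no_types, lifting) mult_zero_right sum.neutral)
  then show ?thesis by (auto simp: colset_def ent_def split: if_splits)
qed

lemma E_mult:
  assumes "finite Z" "\<And>z. z \<notin> Z \<Longrightarrow> E v w g z x = 0"
  shows "E v w (f * g) y x = (\<Sum>z\<in>Z. E v w f y z * E v w g z x)"
proof (induction f rule: falg_induct)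
  case zero then show ?case by simp
next
  case (add f u c)
  let ?z0 = "y - vw v u"
  have "(\<Sum>z\<in>Z. E v w (Poly_Mapping.single u c) y z * E v w g z x)
      = (\<Sum>z\<in>Z. (if z = ?z0 then c * ww v w u ?z0 * E v w g ?z0 x else 0))"
    by (rule sum.cong) (auto simp: E_single ent_def algebra_simps)
  also have "\<dots> = c * ww v w u ?z0 * E v w g ?z0 x"
    using assms by (auto simp: sum.delta)
  finally have "(\<Sum>z\<in>Z. E v w (Poly_Mapping.single u c) y z * E v w g z x)
      = E v w (Poly_Mapping.single u c * g) y x" by (simp add: E_single_mult)
  then show ?case using add
    by (simp add: distrib_right E_add sum.distrib)
qed

lemma E_mult_col: "E v w (f * g) y x = (\<Sum>z\<in>colset g x. E v w f y z * E v w g z x)"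
  by (rule E_mult[OF finite_colset]) (use E_colset in blast)

lemma one_single: "(1::falg) = Poly_Mapping.single (Word []) 1"
  by (simp add: zero_word_Word[symmetric])

lemma E_one: "E v w 1 y x = (if y = x then 1 else 0)"
  by (simp add: one_single E_single ent_def)

lemma E_gen: "E v w (gen_el g) y x = (if y = x + v g then w g x else 0)"
  by (simp add: gen_el_def E_single ent_def)

lemma E_scalar: "E v w (scalar c * f) y x = c * E v w f y x"
  by (simp add: scalar_def E_single_mult)

lemma E_mult_gen: "E v w (f * gen_el g) y x = E v w f y (x + v g) * w g x"
proof -
  have "E v w (f * gen_el g) y x = (\<Sum>z\<in>{x + v g}. E v w f y z * E v w (gen_el g) z x)"
    by (rule E_mult) (auto simp: E_gen)
  then show ?thesis by (simp add: E_gen)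
qed


lemma E_dag_list:
  assumes DG: "\<And>g y x. E v w (dag_gen g) y x = cnj (E v w (gen_el g) x y)"
  shows "E v w (dag_list l) y x = cnj (ent v w (Word l) x y)"
proof (induction l arbitrary: x)
  case Nil then show ?case by (auto simp: E_one ent_def)
next
  case (Cons g l)
  have "E v w (dag_list (g # l)) y x
      = (\<Sum>z\<in>{x - v g}. E v w (dag_list l) y z * E v w (dag_gen g) z x)"
    unfolding dag_list.simps by (rule E_mult) (auto simp: DG E_gen)
  also have "\<dots> = cnj (ent v w (Word l) (x - v g) y) * cnj (w g (x - v g))"
    by (simp add: Cons DG E_gen)
  also have "\<dots> = cnj (ent v w (Word (g # l)) x y)"
  proof -
    have "(x - v g = y + vl v l) \<longleftrightarrow> (x = y + (v g + vl v l))" by (auto simp: algebra_simps)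
    moreover have "x - v g = y + vl v l \<Longrightarrow> y + vl v l = x - v g" by simp
    ultimately show ?thesis by (auto simp: ent_def)
  qed
  finally show ?case .
qed

lemma E_dagger:
  assumes DG: "\<And>g y x. E v w (dag_gen g) y x = cnj (E v w (gen_el g) x y)"
  shows "E v w (dagger f) y x = cnj (E v w f x y)"
proof -
  have "E v w (dagger f) y x
      = (\<Sum>u\<in>Poly_Mapping.keys f. cnj (Poly_Mapping.lookup f u) * E v w (dag_word u) y x)"
    by (simp add: dagger_def lin_def E_sum E_scalar)
  also have "\<dots> = (\<Sum>u\<in>Poly_Mapping.keys f. cnj (Poly_Mapping.lookup f u * ent v w u x y))"
  proof (rule sum.cong)
    fix u show "cnj (Poly_Mapping.lookup f u) * E v w (dag_word u) y x
        = cnj (Poly_Mapping.lookup f u * ent v w u x y)"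
      by (cases u) (simp add: E_dag_list[OF DG])
  qed simp
  also have "\<dots> = cnj (E v w f x y)" by (simp add: E_def lin_def)
  finally show ?thesis .
qed

definition Kset :: "pt set \<Rightarrow> falg set" where
  "Kset G = {f. \<forall>x\<in>G. \<forall>y. E v w f y x = 0}"

context
  fixes G :: "pt set"
  assumes inv: "\<And>g x. x \<in> G \<Longrightarrow> w g x \<noteq> 0 \<Longrightarrow> x + v g \<in> G"
begin

lemma wl_good: "x \<in> G \<Longrightarrow> wl v w l x \<noteq> 0 \<Longrightarrow> x + vl v l \<in> G"
proof (induction l)
  case Nil then show ?case by simp
next
  case (Cons g l)
  then have "x + vl v l \<in> G" "w g (x + vl v l) \<noteq> 0" by auto
  then have "x + vl v l + v g \<in> G" by (rule inv)
  then show ?case by (simp add: algebra_simps)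
qed

lemma E_good: "x \<in> G \<Longrightarrow> E v w f y x \<noteq> 0 \<Longrightarrow> y \<in> G"
proof -
  assume x: "x \<in> G" and ne: "E v w f y x \<noteq> 0"
  then have "(\<Sum>u\<in>Poly_Mapping.keys f. Poly_Mapping.lookup f u * ent v w u y x) \<noteq> 0"
    by (simp add: E_def lin_def)
  then obtain u where "ent v w u y x \<noteq> 0"
    by (metis (no_types, lifting) mult_zero_right sum.neutral)
  then obtain l where "u = Word l" "y = x + vl v l" "wl v w l x \<noteq> 0"
    by (cases u) (auto simp: ent_def split: if_splits)
  then show ?thesis using wl_good x by simp
qed

lemma ideal_K:
  assumes rels: "\<And>r. r \<in> sl_rels q \<Longrightarrow> r \<in> Kset G"
  shows "f \<in> sl_ideal q \<Longrightarrow> f \<in> Kset G"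
proof (induction rule: sl_ideal.induct)
  case (rel r) then show ?case by (rule rels)
next
  case zero then show ?case by (simp add: Kset_def)
next
  case (add a b) then show ?case by (simp add: Kset_def E_add)
next
  case (mult a x' y')
  show ?case unfolding Kset_def
  proof (intro CollectI ballI allI)
    fix x y assume x: "x \<in> G"
    have "E v w (x' * a * y') y x = (\<Sum>z\<in>colset y' x. E v w (x' * a) y z * E v w y' z x)"
      by (rule E_mult_col)
    also have "\<dots> = 0"
    proof (rule sum.neutral, rule ballI)
      fix z assume "z \<in> colset y' x"
      show "E v w (x' * a) y z * E v w y' z x = 0"
      proof (cases "E v w y' z x = 0")
        case False
        then have z: "z \<in> G" using E_good x by blast
        have "E v w (x' * a) y z = (\<Sum>z'\<in>colset a z. E v w x' y z' * E v w a z' z)"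
          by (rule E_mult_col)
        also have "\<dots> = 0"
        proof -
          have h: "\<And>y. E v w a y z = 0" using mult.IH z unfolding Kset_def by blast
          show ?thesis by (simp add: h)
        qed
        finally show ?thesis by simp
      qed simp
    qed
    finally show "E v w (x' * a * y') y x = 0" .
  qed
qed

end

lemma positivity:
  assumes DG: "\<And>g y x. E v w (dag_gen g) y x = cnj (E v w (gen_el g) x y)"
    and fin: "finite A" and i: "i \<in> A"
    and z: "E v w (\<Sum>j\<in>A. dagger (t j) * t j) x x = 0"
  shows "E v w (t i) y x = 0"
proof -
  have "E v w (\<Sum>j\<in>A. dagger (t j) * t j) x x
      = (\<Sum>j\<in>A. \<Sum>z\<in>colset (t j) x. cnj (E v w (t j) z x) * E v w (t j) z x)"
    by (simp add: E_sum E_mult_col E_dagger[OF DG])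
  also have "\<dots> = complex_of_real (\<Sum>j\<in>A. \<Sum>z\<in>colset (t j) x. (cmod (E v w (t j) z x))\<^sup>2)"
  proof -
    have sq: "\<And>a. cnj a * a = complex_of_real ((cmod a)\<^sup>2)"
      by (metis complex_norm_square mult.commute)
    show ?thesis by (simp only: sq of_real_sum)
  qed
  finally have eq: "E v w (\<Sum>j\<in>A. dagger (t j) * t j) x x
      = complex_of_real (\<Sum>j\<in>A. \<Sum>z\<in>colset (t j) x. (cmod (E v w (t j) z x))\<^sup>2)" .
  have "(\<Sum>j\<in>A. \<Sum>z\<in>colset (t j) x. (cmod (E v w (t j) z x))\<^sup>2) = 0"
  proof -
    have "complex_of_real (\<Sum>j\<in>A. \<Sum>z\<in>colset (t j) x. (cmod (E v w (t j) z x))\<^sup>2) = 0"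
      using eq z by (rule HOL.subst[where P = "\<lambda>t. t = 0"])
    then show ?thesis by (simp only: of_real_eq_0_iff)
  qed
  then have "\<forall>j\<in>A. (\<Sum>z\<in>colset (t j) x. (cmod (E v w (t j) z x))\<^sup>2) = 0"
    using sum_nonneg_eq_0_iff[OF fin, of "\<lambda>j. \<Sum>z\<in>colset (t j) x. (cmod (E v w (t j) z x))\<^sup>2"]
    by (simp add: sum_nonneg)
  then have "(\<Sum>z\<in>colset (t i) x. (cmod (E v w (t i) z x))\<^sup>2) = 0" using i by blast
  then have "\<forall>z\<in>colset (t i) x. (cmod (E v w (t i) z x))\<^sup>2 = 0"
    using sum_nonneg_eq_0_iff[OF finite_colset[of "t i" x], of "\<lambda>z. (cmod (E v w (t i) z x))\<^sup>2"]
    by simp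
  then show ?thesis using E_colset by fastforce
qed

end

section \<open>Vanishing of polynomial expressions\<close>

lemma poly_vanish:
  fixes c :: "'a \<Rightarrow> complex" and g :: "'a \<Rightarrow> nat"
  assumes fin: "finite G"
    and z: "\<And>t::real. t > 0 \<Longrightarrow> (\<Sum>al\<in>G. c al * complex_of_real t ^ g al) = 0"
  shows "(\<Sum>al\<in>{al\<in>G. g al = j}. c al) = 0"
proof -
  define s where "s j = (\<Sum>al\<in>{al\<in>G. g al = j}. c al)" for j
  define p where "p = (\<Sum>j\<in>g ` G. monom (s j) j)"
  have ev: "poly p (complex_of_real t) = (\<Sum>al\<in>G. c al * complex_of_real t ^ g al)" for t
  proof -
    have "poly p (complex_of_real t) = (\<Sum>j\<in>g ` G. s j * complex_of_real t ^ j)"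
      by (simp add: p_def poly_sum poly_monom)
    also have "\<dots> = (\<Sum>j\<in>g ` G. \<Sum>al\<in>{al\<in>G. g al = j}. c al * complex_of_real t ^ g al)"
      by (rule sum.cong) (auto simp: s_def sum_distrib_right)
    also have "\<dots> = (\<Sum>al\<in>G. c al * complex_of_real t ^ g al)"
      by (rule sum.group[OF fin]) (use fin in auto)
    finally show ?thesis .
  qed
  have "p = 0"
  proof (rule ccontr)
    assume "p \<noteq> 0"
    then have "finite {x. poly p x = 0}" by (rule poly_roots_finite)
    moreover have "complex_of_real ` {0<..} \<subseteq> {x. poly p x = 0}"
      using ev z by auto
    ultimately have "finite (complex_of_real ` {0<..})" by (rule finite_subset[rotated])
    moreover have "inj_on complex_of_real {0<..}" by (auto intro: inj_onI)
    ultimately have "finite {0::real<..}" using finite_image_iff by blast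
    then show False using infinite_Ioi by blast
  qed
  then have "coeff p j = 0" by simp
  moreover have "coeff p j = (if j \<in> g ` G then s j else 0)"
    using fin by (simp add: p_def coeff_sum sum.delta')
  ultimately have r: "j \<in> g ` G \<Longrightarrow> s j = 0" by simp
  show ?thesis
  proof (cases "j \<in> g ` G")
    case True then show ?thesis using r s_def by simp
  next
    case False
    then have e: "{al\<in>G. g al = j} = {}" by auto
    show ?thesis by (simp only: e sum.empty)
  qed
qed

lemma poly_vanish2:
  fixes c :: "'a \<Rightarrow> complex" and g h :: "'a \<Rightarrow> nat"
  assumes fin: "finite G"
    and z: "\<And>s t::real. s > 0 \<Longrightarrow> t > 0 \<Longrightarrow>
       (\<Sum>al\<in>G. c al * complex_of_real s ^ g al * complex_of_real t ^ h al) = 0"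
  shows "(\<Sum>al\<in>{al\<in>G. g al = i \<and> h al = j}. c al) = 0"
proof -
  have A: "(\<Sum>al\<in>{al\<in>G. g al = i}. c al * complex_of_real t ^ h al) = 0" if t: "t > 0" for t
  proof (rule poly_vanish[OF fin, where c = "\<lambda>al. c al * complex_of_real t ^ h al"])
    fix s :: real assume "s > 0"
    then show "(\<Sum>al\<in>G. c al * complex_of_real t ^ h al * complex_of_real s ^ g al) = 0"
      using z[of s t] t by (simp add: mult_ac)
  qed
  then have "(\<Sum>al\<in>{al\<in>{al\<in>G. g al = i}. h al = j}. c al) = 0"
    using poly_vanish[of "{al\<in>G. g al = i}" c h j] fin A by auto
  moreover have "{al\<in>{al\<in>G. g al = i}. h al = j} = {al\<in>G. g al = i \<and> h al = j}" by auto
  ultimately show ?thesis by simp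
qed


definition WT :: "(gen \<Rightarrow> pt) \<Rightarrow> (gen \<Rightarrow> pt \<Rightarrow> complex) \<Rightarrow> falg \<Rightarrow> pt \<Rightarrow> (pt \<Rightarrow> complex) \<Rightarrow> bool" where
  "WT v w f u th \<longleftrightarrow> (\<forall>y x. E v w f y x = (if y = x + u then th x else 0))"

definition shn :: "pt \<Rightarrow> nat \<Rightarrow> pt" where
  "shn u n = (int n * fst u, int n * snd u)"

fun Pw :: "(pt \<Rightarrow> complex) \<Rightarrow> pt \<Rightarrow> nat \<Rightarrow> pt \<Rightarrow> complex" where
  "Pw th u 0 x = 1"
| "Pw th u (Suc n) x = th (x + shn u n) * Pw th u n x"

lemma shn_0[simp]: "shn u 0 = 0" by (simp add: shn_def zero_prod_def)
lemma shn_Suc: "shn u (Suc n) = shn u n + u"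
  by (cases u) (simp add: shn_def algebra_simps)

lemma WT_mult:
  assumes "WT v w f u th" "WT v w g u' th'"
  shows "WT v w (f * g) (u' + u) (\<lambda>x. th (x + u') * th' x)"
  unfolding WT_def
proof (intro allI)
  fix y x
  have h: "\<And>y x. E v w g y x = (if y = x + u' then th' x else 0)"
    using assms(2) unfolding WT_def by blast
  have h1: "\<And>y x. E v w f y x = (if y = x + u then th x else 0)"
    using assms(1) unfolding WT_def by blast
  have "E v w (f * g) y x = (\<Sum>z\<in>{x + u'}. E v w f y z * E v w g z x)"
    by (rule E_mult) (simp_all add: h)
  also have "\<dots> = E v w f y (x + u') * th' x" by (simp add: h)
  also have "\<dots> = (if y = x + (u' + u) then th (x + u') * th' x else 0)"
    by (simp add: h1 add.assoc)
  finally show "E v w (f * g) y x = (if y = x + (u' + u) then th (x + u') * th' x else 0)" .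
qed

lemma WT_one: "WT v w 1 0 (\<lambda>_. 1)"
  by (simp add: WT_def E_one)

lemma WT_pow:
  assumes "WT v w f u th"
  shows "WT v w (f ^ n) (shn u n) (Pw th u n)"
proof (induction n)
  case 0 then show ?case using WT_one by simp
next
  case (Suc n)
  have "WT v w (f * f ^ n) (shn u n + u) (\<lambda>x. th (x + shn u n) * Pw th u n x)"
    by (rule WT_mult[OF assms Suc.IH])
  then show ?case by (simp add: shn_Suc)
qed

lemma Pw_scale: "Pw (\<lambda>x. c * th x) u n x = c ^ n * Pw th u n x"
  by (induction n) (simp_all add: algebra_simps)

lemma Pw_const: "Pw (\<lambda>x. c) u n x = c ^ n"
  by (induction n) simp_all

lemma Pw_zero: "j < n \<Longrightarrow> th (x + shn u j) = 0 \<Longrightarrow> Pw th u n x = 0"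
  by (induction n) (auto simp: less_Suc_eq)

lemma Pw_nonzero: "(\<And>j. j < n \<Longrightarrow> th (x + shn u j) \<noteq> 0) \<Longrightarrow> Pw th u n x \<noteq> 0"
  by (induction n) auto

definition sh4 :: "pt \<Rightarrow> pt \<Rightarrow> pt \<Rightarrow> pt \<Rightarrow> nat \<times> nat \<times> nat \<times> nat \<Rightarrow> pt" where
  "sh4 u1 u2 u3 u4 al = (case al of (a, b, c, d) \<Rightarrow> shn u4 d + (shn u3 c + (shn u2 b + shn u1 a)))"

definition Th4 :: "(pt \<Rightarrow> complex) \<Rightarrow> (pt \<Rightarrow> complex) \<Rightarrow> (pt \<Rightarrow> complex) \<Rightarrow> (pt \<Rightarrow> complex)
   \<Rightarrow> pt \<Rightarrow> pt \<Rightarrow> pt \<Rightarrow> pt \<Rightarrow> nat \<times> nat \<times> nat \<times> nat \<Rightarrow> pt \<Rightarrow> complex" where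
  "Th4 t1 t2 t3 t4 u1 u2 u3 u4 al x = (case al of (a, b, c, d) \<Rightarrow>
     Pw t1 u1 a (x + shn u4 d + shn u3 c + shn u2 b) * Pw t2 u2 b (x + shn u4 d + shn u3 c)
     * Pw t3 u3 c (x + shn u4 d) * Pw t4 u4 d x)"

lemma WT_mono:
  assumes "WT v w Z1 u1 t1" "WT v w Z2 u2 t2" "WT v w Z3 u3 t3" "WT v w Z4 u4 t4"
  shows "WT v w (mono4 Z1 Z2 Z3 Z4 al) (sh4 u1 u2 u3 u4 al) (Th4 t1 t2 t3 t4 u1 u2 u3 u4 al)"
proof -
  obtain a b c d where al: "al = (a, b, c, d)" by (cases al) auto
  have "WT v w (Z1 ^ a * Z2 ^ b * Z3 ^ c * Z4 ^ d)
     (shn u4 d + (shn u3 c + (shn u2 b + shn u1 a)))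
     (\<lambda>x. (\<lambda>x. (\<lambda>x. Pw t1 u1 a (x + shn u2 b) * Pw t2 u2 b x) (x + shn u3 c) * Pw t3 u3 c x)
        (x + shn u4 d) * Pw t4 u4 d x)"
    by (intro WT_mult WT_pow assms)
  moreover have "Th4 t1 t2 t3 t4 u1 u2 u3 u4 (a, b, c, d) =
     (\<lambda>x. (\<lambda>x. (\<lambda>x. Pw t1 u1 a (x + shn u2 b) * Pw t2 u2 b x) (x + shn u3 c) * Pw t3 u3 c x)
        (x + shn u4 d) * Pw t4 u4 d x)"
    by (rule ext) (simp add: Th4_def add.assoc)
  ultimately show ?thesis by (simp add: al mono4_def sh4_def)
qed


lemma WT_E: "WT v w f u th \<Longrightarrow> E v w f y x = (if y = x + u then th x else 0)"
  unfolding WT_def by blast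

lemma E_lsum4: "E v w (lsum4 Z1 Z2 Z3 Z4 C) y x
   = (\<Sum>al\<in>Poly_Mapping.keys C. Poly_Mapping.lookup C al * E v w (mono4 Z1 Z2 Z3 Z4 al) y x)"
  by (simp add: lsum4_eq E_sum E_scalar)

lemma sh4_eq: "sh4 (1,0) (0,e) (0,-e) (-1,0) (a,b,c,d) = (int a - int d, e * int b - e * int c)"
  by (simp add: sh4_def shn_def algebra_simps)

lemma WT_scaled_mono:
  assumes "WT v w Z1 u1 (\<lambda>x. m * t1 x)" "WT v w Z2 u2 (\<lambda>x. m * t2 x)"
    "WT v w Z3 u3 (\<lambda>x. m * t3 x)" "WT v w Z4 u4 (\<lambda>x. m * t4 x)"
  shows "E v w (mono4 Z1 Z2 Z3 Z4 (a,b,c,d)) y x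
    = (if y = x + sh4 u1 u2 u3 u4 (a,b,c,d) then m ^ (a+b+c+d) * Th4 t1 t2 t3 t4 u1 u2 u3 u4 (a,b,c,d) x else 0)"
proof -
  have "WT v w (mono4 Z1 Z2 Z3 Z4 (a,b,c,d)) (sh4 u1 u2 u3 u4 (a,b,c,d))
     (Th4 (\<lambda>x. m * t1 x) (\<lambda>x. m * t2 x) (\<lambda>x. m * t3 x) (\<lambda>x. m * t4 x) u1 u2 u3 u4 (a,b,c,d))"
    by (rule WT_mono[OF assms])
  note e = WT_E[OF this, of y x]
  have "Th4 (\<lambda>x. m * t1 x) (\<lambda>x. m * t2 x) (\<lambda>x. m * t3 x) (\<lambda>x. m * t4 x) u1 u2 u3 u4 (a,b,c,d) x
     = m ^ (a+b+c+d) * Th4 t1 t2 t3 t4 u1 u2 u3 u4 (a,b,c,d) x" for x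
    by (simp add: Th4_def Pw_scale power_add mult_ac)
  then show ?thesis using e by simp
qed


lemma WT_const_mono:
  assumes "WT v w Z1 u1 (\<lambda>x. c1)" "WT v w Z2 u2 (\<lambda>x. c2)"
    "WT v w Z3 u3 (\<lambda>x. c3)" "WT v w Z4 u4 (\<lambda>x. c4)"
  shows "E v w (mono4 Z1 Z2 Z3 Z4 (a,b,c,d)) y x
    = (if y = x + sh4 u1 u2 u3 u4 (a,b,c,d) then c1 ^ a * c2 ^ b * c3 ^ c * c4 ^ d else 0)"
proof -
  have "WT v w (mono4 Z1 Z2 Z3 Z4 (a,b,c,d)) (sh4 u1 u2 u3 u4 (a,b,c,d))
     (Th4 (\<lambda>x. c1) (\<lambda>x. c2) (\<lambda>x. c3) (\<lambda>x. c4) u1 u2 u3 u4 (a,b,c,d))"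
    by (rule WT_mono[OF assms])
  note e = WT_E[OF this, of y x]
  then show ?thesis by (simp add: Th4_def Pw_const)
qed

lemma indep_boundary:
  fixes v :: "gen \<Rightarrow> pt" and w :: "real \<Rightarrow> gen \<Rightarrow> pt \<Rightarrow> complex" and Z1 Z2 Z3 Z4 :: falg
    and t1 t2 t3 t4 :: "pt \<Rightarrow> complex" and e :: int and C :: "nat \<times> nat \<times> nat \<times> nat \<Rightarrow>\<^sub>0 complex"
  assumes W1: "\<And>m. m > 0 \<Longrightarrow> WT v (w m) Z1 (1,0) (\<lambda>x. complex_of_real m * t1 x)"
    and W2: "\<And>m. m > 0 \<Longrightarrow> WT v (w m) Z2 (0,e) (\<lambda>x. complex_of_real m * t2 x)"
    and W3: "\<And>m. m > 0 \<Longrightarrow> WT v (w m) Z3 (0,-e) (\<lambda>x. complex_of_real m * t3 x)"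
    and W4: "\<And>m. m > 0 \<Longrightarrow> WT v (w m) Z4 (-1,0) (\<lambda>x. complex_of_real m * t4 x)"
    and e: "e \<noteq> 0"
    and n1: "\<And>n k. n \<ge> 0 \<Longrightarrow> t1 (n,k) \<noteq> 0"
    and n2: "\<And>n k. n \<ge> 0 \<Longrightarrow> t2 (n,k) \<noteq> 0"
    and n3: "\<And>n k. n \<ge> 0 \<Longrightarrow> t3 (n,k) \<noteq> 0"
    and n4: "\<And>n k. n \<ge> 1 \<Longrightarrow> t4 (n,k) \<noteq> 0"
    and z4: "\<And>k. t4 (0,k) = 0"
    and van: "\<And>m n k y. m > 0 \<Longrightarrow> n \<ge> 0 \<Longrightarrow> E v (w m) (lsum4 Z1 Z2 Z3 Z4 C) y (n,k) = 0"
  shows "C = 0"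
proof (rule ccontr)
  assume "C \<noteq> 0"
  then have "Poly_Mapping.keys C \<noteq> {}"
    by (metis empty_iff lookup_zero not_in_keys_iff_lookup_eq_zero poly_mapping_eqI)
  then obtain al1 where al1: "al1 \<in> Poly_Mapping.keys C" by blast
  define sh where "sh = sh4 (1,0) (0,e) (0,-e) (-1,0)"
  define Th where "Th = Th4 t1 t2 t3 t4 (1,0) (0,e) (0,-e) (-1,0)"
  define deg :: "nat \<times> nat \<times> nat \<times> nat \<Rightarrow> nat" where "deg al = (case al of (a,b,c,d) \<Rightarrow> a+b+c+d)" for al
  define dd :: "nat \<times> nat \<times> nat \<times> nat \<Rightarrow> nat" where "dd al = (case al of (a,b,c,d) \<Rightarrow> d)" for al
  have Emono: "E v (w m) (mono4 Z1 Z2 Z3 Z4 al) y x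
      = (if y = x + sh al then complex_of_real m ^ deg al * Th al x else 0)" if m: "m > 0" for m al y x
  proof -
    obtain a b c d where al: "al = (a,b,c,d)" by (cases al) auto
    show ?thesis unfolding al sh_def Th_def deg_def
      by (simp add: WT_scaled_mono[OF W1[OF m] W2[OF m] W3[OF m] W4[OF m]])
  qed
  define F' where "F' = {al\<in>Poly_Mapping.keys C. sh al = sh al1 \<and> deg al = deg al1}"
  have finF: "finite F'" by (simp add: F'_def)
  have "al1 \<in> F'" using al1 by (simp add: F'_def)
  define d0 where "d0 = Min (dd ` F')"
  have "d0 \<in> dd ` F'" unfolding d0_def using finF \<open>al1 \<in> F'\<close> by (intro Min_in) auto
  then obtain al0 where al0: "al0 \<in> F'" "dd al0 = d0" by auto
  have dmin: "d0 \<le> dd al" if "al \<in> F'" for al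
    unfolding d0_def using finF that by (intro Min_le) auto
  have uniq: "al = al0" if "al \<in> F'" "dd al = d0" for al
  proof -
    obtain a b c d where al: "al = (a,b,c,d)" by (cases al) auto
    obtain a' b' c' d' where al0': "al0 = (a',b',c',d')" by (cases al0) auto
    have "sh al = sh al0" "deg al = deg al0" using that al0 by (auto simp: F'_def)
    then have h1: "int a - int d = int a' - int d'" and h2: "e * int b - e * int c = e * int b' - e * int c'"
      and h3: "a + b + c + d = a' + b' + c' + d'"
      by (simp_all add: al al0' sh_def sh4_eq deg_def)
    have h4: "d = d'" using that al0 by (simp add: al al0' dd_def)
    have "e * (int b - int c) = e * (int b' - int c')" using h2 by (simp add: algebra_simps)
    then have h5: "int b - int c = int b' - int c'" using e by simp
    show ?thesis using h1 h3 h4 h5 unfolding al al0' by simp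
  qed
  define x :: pt where "x = (int d0, 0)"
  define y where "y = x + sh al1"
  have poly0: "(\<Sum>al\<in>Poly_Mapping.keys C.
      (if sh al = sh al1 then Poly_Mapping.lookup C al * Th al x else 0) * complex_of_real m ^ deg al) = 0"
    if m: "m > 0" for m
  proof -
    have "0 = E v (w m) (lsum4 Z1 Z2 Z3 Z4 C) y x" unfolding x_def using van[OF m] by simp
    also have "\<dots> = (\<Sum>al\<in>Poly_Mapping.keys C. Poly_Mapping.lookup C al *
        (if y = x + sh al then complex_of_real m ^ deg al * Th al x else 0))"
      by (simp add: E_lsum4 Emono[OF m])
    also have "\<dots> = (\<Sum>al\<in>Poly_Mapping.keys C.
      (if sh al = sh al1 then Poly_Mapping.lookup C al * Th al x else 0) * complex_of_real m ^ deg al)"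
      by (rule sum.cong) (auto simp: y_def)
    finally show ?thesis by simp
  qed
  have "(\<Sum>al\<in>{al\<in>Poly_Mapping.keys C. deg al = deg al1}.
      (if sh al = sh al1 then Poly_Mapping.lookup C al * Th al x else 0)) = 0"
    by (rule poly_vanish) (use poly0 in auto)
  also have "(\<Sum>al\<in>{al\<in>Poly_Mapping.keys C. deg al = deg al1}.
      (if sh al = sh al1 then Poly_Mapping.lookup C al * Th al x else 0))
      = (\<Sum>al\<in>F'. Poly_Mapping.lookup C al * Th al x)"
  proof -
    have "(\<Sum>al\<in>{al\<in>Poly_Mapping.keys C. deg al = deg al1}.
      (if sh al = sh al1 then Poly_Mapping.lookup C al * Th al x else 0))
      = (\<Sum>al\<in>{al\<in>{al\<in>Poly_Mapping.keys C. deg al = deg al1}. sh al = sh al1}.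
           Poly_Mapping.lookup C al * Th al x)"
      by (rule sum.inter_filter[symmetric]) simp
    also have "{al\<in>{al\<in>Poly_Mapping.keys C. deg al = deg al1}. sh al = sh al1} = F'"
      by (auto simp: F'_def)
    finally show ?thesis .
  qed
  also have "(\<Sum>al\<in>F'. Poly_Mapping.lookup C al * Th al x) = (\<Sum>al\<in>{al0}. Poly_Mapping.lookup C al * Th al x)"
  proof (rule sum.mono_neutral_right[OF finF])
    show "{al0} \<subseteq> F'" using al0(1) by simp
    show "\<forall>al\<in>F' - {al0}. Poly_Mapping.lookup C al * Th al x = 0"
    proof
      fix al assume "al \<in> F' - {al0}"
      then have a: "al \<in> F'" "al \<noteq> al0" by auto
      then have "dd al \<noteq> d0" using uniq by blast
      then have lt: "d0 < dd al" using dmin[OF a(1)] by simp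
      obtain a' b c d where al: "al = (a',b,c,d)" by (cases al) auto
      have "Pw t4 (-1,0) d x = 0"
        by (rule Pw_zero[of d0]) (use lt in \<open>simp_all add: al dd_def x_def shn_def z4\<close>)
      then show "Poly_Mapping.lookup C al * Th al x = 0" by (simp add: Th_def Th4_def al)
    qed
  qed
  finally have "Poly_Mapping.lookup C al0 * Th al0 x = 0" by simp
  moreover have "Th al0 x \<noteq> 0"
  proof -
    obtain a b c d where al: "al0 = (a,b,c,d)" by (cases al0) auto
    have d: "d = d0" using al0(2) by (simp add: al dd_def)
    have "Pw t4 (-1,0) d x \<noteq> 0"
      by (rule Pw_nonzero) (use d in \<open>auto simp: x_def shn_def intro!: n4\<close>)
    moreover have "Pw t3 (0,-e) c (x + shn (-1,0) d) \<noteq> 0"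
      by (rule Pw_nonzero) (use d in \<open>auto simp: x_def shn_def intro!: n3\<close>)
    moreover have "Pw t2 (0,e) b (x + shn (-1,0) d + shn (0,-e) c) \<noteq> 0"
      by (rule Pw_nonzero) (use d in \<open>auto simp: x_def shn_def intro!: n2\<close>)
    moreover have "Pw t1 (1,0) a (x + shn (-1,0) d + shn (0,-e) c + shn (0,e) b) \<noteq> 0"
      by (rule Pw_nonzero) (use d in \<open>auto simp: x_def shn_def intro!: n1\<close>)
    ultimately show ?thesis by (simp add: Th_def Th4_def al)
  qed
  moreover have "Poly_Mapping.lookup C al0 \<noteq> 0" using al0(1) by (simp add: F'_def in_keys_iff)
  ultimately show False by simp
qed


lemma indep_q1:
  fixes v :: "gen \<Rightarrow> pt" and w :: "real \<Rightarrow> real \<Rightarrow> gen \<Rightarrow> pt \<Rightarrow> complex" and Z1 Z2 Z3 Z4 :: falg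
    and C :: "nat \<times> nat \<times> nat \<times> nat \<Rightarrow>\<^sub>0 complex"
  assumes W1: "\<And>s t. s > 0 \<Longrightarrow> t > 0 \<Longrightarrow> WT v (w s t) Z1 (1,0) (\<lambda>x. complex_of_real s)"
    and W2: "\<And>s t. s > 0 \<Longrightarrow> t > 0 \<Longrightarrow> WT v (w s t) Z2 (0,1) (\<lambda>x. complex_of_real t)"
    and W3: "\<And>s t. s > 0 \<Longrightarrow> t > 0 \<Longrightarrow> WT v (w s t) Z3 (0,-1) (\<lambda>x. - complex_of_real t)"
    and W4: "\<And>s t. s > 0 \<Longrightarrow> t > 0 \<Longrightarrow> WT v (w s t) Z4 (-1,0) (\<lambda>x. complex_of_real s)"
    and van: "\<And>s t y. s > 0 \<Longrightarrow> t > 0 \<Longrightarrow> E v (w s t) (lsum4 Z1 Z2 Z3 Z4 C) y (0,0) = 0"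
  shows "C = 0"
proof (rule ccontr)
  assume "C \<noteq> 0"
  then have "Poly_Mapping.keys C \<noteq> {}"
    by (metis empty_iff lookup_zero not_in_keys_iff_lookup_eq_zero poly_mapping_eqI)
  then obtain al0 where al0: "al0 \<in> Poly_Mapping.keys C" by blast
  define sh where "sh = sh4 (1,0) (0,1) (0,-1) (-1,0)"
  define g :: "nat \<times> nat \<times> nat \<times> nat \<Rightarrow> nat" where "g al = (case al of (a,b,c,d) \<Rightarrow> a+d)" for al
  define h :: "nat \<times> nat \<times> nat \<times> nat \<Rightarrow> nat" where "h al = (case al of (a,b,c,d) \<Rightarrow> b+c)" for al
  define sg :: "nat \<times> nat \<times> nat \<times> nat \<Rightarrow> complex" where "sg al = (case al of (a,b,c,d) \<Rightarrow> (-1)^c)" for al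
  define x :: pt where "x = (0,0)"
  define y where "y = x + sh al0"
  have Emono: "E v (w s t) (mono4 Z1 Z2 Z3 Z4 al) y x
      = (if y = x + sh al then sg al * complex_of_real s ^ g al * complex_of_real t ^ h al else 0)"
    if st: "s > 0" "t > 0" for s t al y x
  proof -
    obtain a b c d where al: "al = (a,b,c,d)" by (cases al) auto
    have e: "E v (w s t) (mono4 Z1 Z2 Z3 Z4 (a,b,c,d)) y x
      = (if y = x + sh4 (1,0) (0,1) (0,-1) (-1,0) (a,b,c,d) then
         complex_of_real s ^ a * complex_of_real t ^ b * (- complex_of_real t) ^ c * complex_of_real s ^ d else 0)"
      by (rule WT_const_mono[OF W1[OF st] W2[OF st] W3[OF st] W4[OF st]])
    have "complex_of_real s ^ a * complex_of_real t ^ b * (- complex_of_real t) ^ c * complex_of_real s ^ d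
      = sg al * complex_of_real s ^ g al * complex_of_real t ^ h al"
      by (simp add: al sg_def g_def h_def power_add power_minus[of "complex_of_real t" c] mult_ac)
    then show ?thesis using e by (simp add: al sh_def)
  qed
  have poly0: "(\<Sum>al\<in>Poly_Mapping.keys C. (if sh al = sh al0 then Poly_Mapping.lookup C al * sg al else 0)
      * complex_of_real s ^ g al * complex_of_real t ^ h al) = 0" if st: "s > 0" "t > 0" for s t
  proof -
    have "0 = E v (w s t) (lsum4 Z1 Z2 Z3 Z4 C) y x" unfolding x_def using van[OF st] by simp
    also have "\<dots> = (\<Sum>al\<in>Poly_Mapping.keys C. Poly_Mapping.lookup C al *
        (if y = x + sh al then sg al * complex_of_real s ^ g al * complex_of_real t ^ h al else 0))"
      by (simp add: E_lsum4 Emono[OF st])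
    also have "\<dots> = (\<Sum>al\<in>Poly_Mapping.keys C. (if sh al = sh al0 then Poly_Mapping.lookup C al * sg al else 0)
      * complex_of_real s ^ g al * complex_of_real t ^ h al)"
      by (rule sum.cong) (auto simp: y_def x_def)
    finally show ?thesis by simp
  qed
  have "(\<Sum>al\<in>{al\<in>Poly_Mapping.keys C. g al = g al0 \<and> h al = h al0}.
      (if sh al = sh al0 then Poly_Mapping.lookup C al * sg al else 0)) = 0"
    by (rule poly_vanish2) (use poly0 in auto)
  also have "(\<Sum>al\<in>{al\<in>Poly_Mapping.keys C. g al = g al0 \<and> h al = h al0}.
      (if sh al = sh al0 then Poly_Mapping.lookup C al * sg al else 0))
    = (\<Sum>al\<in>{al0}. (if sh al = sh al0 then Poly_Mapping.lookup C al * sg al else 0))"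
  proof (rule sum.mono_neutral_right)
    show "finite {al\<in>Poly_Mapping.keys C. g al = g al0 \<and> h al = h al0}" by simp
    show "{al0} \<subseteq> {al\<in>Poly_Mapping.keys C. g al = g al0 \<and> h al = h al0}" using al0 by simp
    show "\<forall>al\<in>{al\<in>Poly_Mapping.keys C. g al = g al0 \<and> h al = h al0} - {al0}.
      (if sh al = sh al0 then Poly_Mapping.lookup C al * sg al else 0) = 0"
    proof
      fix al assume a: "al \<in> {al\<in>Poly_Mapping.keys C. g al = g al0 \<and> h al = h al0} - {al0}"
      obtain a b c d where al: "al = (a,b,c,d)" by (cases al) auto
      obtain a' b' c' d' where al0': "al0 = (a',b',c',d')" by (cases al0) auto
      have "sh al \<noteq> sh al0"
      proof
        assume "sh al = sh al0"
        then have "int a - int d = int a' - int d'" "int b - int c = int b' - int c'"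
          by (simp_all add: al al0' sh_def sh4_eq)
        moreover have "a + d = a' + d'" "b + c = b' + c'" using a by (simp_all add: al al0' g_def h_def)
        ultimately have "al = al0" unfolding al al0' by simp
        then show False using a by simp
      qed
      then show "(if sh al = sh al0 then Poly_Mapping.lookup C al * sg al else 0) = 0" by simp
    qed
  qed
  also have "\<dots> = Poly_Mapping.lookup C al0 * sg al0" by simp
  finally have "Poly_Mapping.lookup C al0 * sg al0 = 0" .
  moreover have "sg al0 \<noteq> 0" by (cases al0) (simp add: sg_def)
  moreover have "Poly_Mapping.lookup C al0 \<noteq> 0" using al0 by (simp add: in_keys_iff)
  ultimately show False by simp
qed


lemma E_scalar_only: "E v w (scalar c) y x = (if y = x then c else 0)"
  using E_scalar[of v w c 1 y x] by (simp add: E_one)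

lemma rels_generic:
  fixes v :: "gen \<Rightarrow> pt" and w :: "gen \<Rightarrow> pt \<Rightarrow> complex" and q :: real and x :: pt
  defines "cq \<equiv> complex_of_real q" and "cqi \<equiv> complex_of_real (1 / q)"
  assumes vD: "v Dl = 0" and vDi: "v DlInv = 0"
    and v1: "v G22 = - v G11" and v2: "v G21 = - v G12"
    and i1: "w G11 (x + v G12) * w G12 x = cqi * (w G12 (x + v G11) * w G11 x)"
    and i2: "w G11 (x + v G21) * w G21 x = cqi * (w G21 (x + v G11) * w G11 x)"
    and i3: "w G12 (x + v G22) * w G22 x = cqi * (w G22 (x + v G12) * w G12 x)"
    and i4: "w G21 (x + v G22) * w G22 x = cqi * (w G22 (x + v G21) * w G21 x)"
    and i5: "w G12 (x + v G21) * w G21 x = w G21 (x + v G12) * w G12 x"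
    and i6: "w G11 (x + v G22) * w G22 x - cqi * w G12 (x + v G21) * w G21 x = 1"
    and i7: "w G22 (x + v G11) * w G11 x - cq * w G21 (x + v G12) * w G12 x = 1"
    and i8: "w Dl x * w DlInv x = 1"
    and i10: "w Dl (x + v G11) * w G11 x = w G11 x * w Dl x"
    and i11: "w Dl (x + v G12) * w G12 x = cq * (w G12 x * w Dl x)"
    and i12: "w Dl (x + v G21) * w G21 x = cqi * (w G21 x * w Dl x)"
    and i13: "w Dl (x + v G22) * w G22 x = w G22 x * w Dl x"
    and r: "r \<in> sl_rels q"
  shows "E v w r y x = 0"
proof -
  note simps = E_diff E_mult_gen E_scalar_only E_gen E_one vD vDi v1 v2
  from r have "r = gA * gB - scalar cqi * gB * gA \<or> r = gA * gC - scalar cqi * gC * gA \<or>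
      r = gB * gE - scalar cqi * gE * gB \<or> r = gC * gE - scalar cqi * gE * gC \<or>
      r = gB * gC - gC * gB \<or> r = gA * gE - scalar cqi * gB * gC - 1 \<or>
      r = gE * gA - scalar cq * gC * gB - 1 \<or> r = gD * gDi - 1 \<or> r = gDi * gD - 1 \<or>
      r = gD * gA - gA * gD \<or> r = gD * gB - scalar cq * gB * gD \<or>
      r = gD * gC - scalar cqi * gC * gD \<or> r = gD * gE - gE * gD"
    unfolding sl_rels_def Let_def cq_def cqi_def by (simp only: insert_iff empty_iff simp_thms)
  then show ?thesis
  proof (elim disjE)
    assume "r = gA * gB - scalar cqi * gB * gA"
    then show ?thesis using i1 by (simp add: simps add_ac)
  next
    assume "r = gA * gC - scalar cqi * gC * gA"
    then show ?thesis using i2 by (simp add: simps add_ac)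
  next
    assume "r = gB * gE - scalar cqi * gE * gB"
    then show ?thesis using i3 by (simp add: simps add_ac)
  next
    assume "r = gC * gE - scalar cqi * gE * gC"
    then show ?thesis using i4 by (simp add: simps add_ac)
  next
    assume "r = gB * gC - gC * gB"
    then show ?thesis using i5 by (simp add: simps add_ac)
  next
    assume "r = gA * gE - scalar cqi * gB * gC - 1"
    then show ?thesis using i6 by (simp add: simps add_ac)
  next
    assume "r = gE * gA - scalar cq * gC * gB - 1"
    then show ?thesis using i7 by (simp add: simps add_ac)
  next
    assume "r = gD * gDi - 1"
    then show ?thesis using i8 by (simp add: simps add_ac)
  next
    assume "r = gDi * gD - 1"
    then show ?thesis using i8 by (simp add: simps add_ac mult.commute)
  next
    assume "r = gD * gA - gA * gD"
    then show ?thesis using i10 by (simp add: simps add_ac)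
  next
    assume "r = gD * gB - scalar cq * gB * gD"
    then show ?thesis using i11 by (simp add: simps add_ac)
  next
    assume "r = gD * gC - scalar cqi * gC * gD"
    then show ?thesis using i12 by (simp add: simps add_ac)
  next
    assume "r = gD * gE - gE * gD"
    then show ?thesis using i13 by (simp add: simps add_ac)
  qed
qed


lemma rels_real:
  fixes v :: "gen \<Rightarrow> pt" and wr :: "gen \<Rightarrow> pt \<Rightarrow> real" and q :: real and x :: pt
  assumes vD: "v Dl = 0" and vDi: "v DlInv = 0"
    and v1: "v G22 = - v G11" and v2: "v G21 = - v G12"
    and i1: "wr G11 (x + v G12) * wr G12 x = 1 / q * (wr G12 (x + v G11) * wr G11 x)"
    and i2: "wr G11 (x + v G21) * wr G21 x = 1 / q * (wr G21 (x + v G11) * wr G11 x)"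
    and i3: "wr G12 (x + v G22) * wr G22 x = 1 / q * (wr G22 (x + v G12) * wr G12 x)"
    and i4: "wr G21 (x + v G22) * wr G22 x = 1 / q * (wr G22 (x + v G21) * wr G21 x)"
    and i5: "wr G12 (x + v G21) * wr G21 x = wr G21 (x + v G12) * wr G12 x"
    and i6: "wr G11 (x + v G22) * wr G22 x - 1 / q * wr G12 (x + v G21) * wr G21 x = 1"
    and i7: "wr G22 (x + v G11) * wr G11 x - q * wr G21 (x + v G12) * wr G12 x = 1"
    and i8: "wr Dl x * wr DlInv x = 1"
    and i10: "wr Dl (x + v G11) * wr G11 x = wr G11 x * wr Dl x"
    and i11: "wr Dl (x + v G12) * wr G12 x = q * (wr G12 x * wr Dl x)"
    and i12: "wr Dl (x + v G21) * wr G21 x = 1 / q * (wr G21 x * wr Dl x)"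
    and i13: "wr Dl (x + v G22) * wr G22 x = wr G22 x * wr Dl x"
    and r: "r \<in> sl_rels q"
  shows "E v (\<lambda>g x. complex_of_real (wr g x)) r y x = 0"
proof (rule rels_generic[OF vD vDi v1 v2 _ _ _ _ _ _ _ _ _ _ _ _ r])
  note c = arg_cong[where f = complex_of_real]
  show "complex_of_real (wr G11 (x + v G12)) * complex_of_real (wr G12 x) =
    complex_of_real (1 / q) * (complex_of_real (wr G12 (x + v G11)) * complex_of_real (wr G11 x))"
    using c[OF i1] by (simp only: of_real_mult)
  show "complex_of_real (wr G11 (x + v G21)) * complex_of_real (wr G21 x) =
    complex_of_real (1 / q) * (complex_of_real (wr G21 (x + v G11)) * complex_of_real (wr G11 x))"
    using c[OF i2] by (simp only: of_real_mult)
  show "complex_of_real (wr G12 (x + v G22)) * complex_of_real (wr G22 x) =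
    complex_of_real (1 / q) * (complex_of_real (wr G22 (x + v G12)) * complex_of_real (wr G12 x))"
    using c[OF i3] by (simp only: of_real_mult)
  show "complex_of_real (wr G21 (x + v G22)) * complex_of_real (wr G22 x) =
    complex_of_real (1 / q) * (complex_of_real (wr G22 (x + v G21)) * complex_of_real (wr G21 x))"
    using c[OF i4] by (simp only: of_real_mult)
  show "complex_of_real (wr G12 (x + v G21)) * complex_of_real (wr G21 x) =
    complex_of_real (wr G21 (x + v G12)) * complex_of_real (wr G12 x)"
    using c[OF i5] by (simp only: of_real_mult)
  show "complex_of_real (wr G11 (x + v G22)) * complex_of_real (wr G22 x) -
    complex_of_real (1 / q) * complex_of_real (wr G12 (x + v G21)) * complex_of_real (wr G21 x) = 1"
    using c[OF i6] by (simp only: of_real_mult of_real_diff of_real_1)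
  show "complex_of_real (wr G22 (x + v G11)) * complex_of_real (wr G11 x) -
    complex_of_real q * complex_of_real (wr G21 (x + v G12)) * complex_of_real (wr G12 x) = 1"
    using c[OF i7] by (simp only: of_real_mult of_real_diff of_real_1)
  show "complex_of_real (wr Dl x) * complex_of_real (wr DlInv x) = 1"
    using c[OF i8] by (simp only: of_real_mult of_real_1)
  show "complex_of_real (wr Dl (x + v G11)) * complex_of_real (wr G11 x) =
    complex_of_real (wr G11 x) * complex_of_real (wr Dl x)"
    using c[OF i10] by (simp only: of_real_mult)
  show "complex_of_real (wr Dl (x + v G12)) * complex_of_real (wr G12 x) =
    complex_of_real q * (complex_of_real (wr G12 x) * complex_of_real (wr Dl x))"
    using c[OF i11] by (simp only: of_real_mult)
  show "complex_of_real (wr Dl (x + v G21)) * complex_of_real (wr G21 x) =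
    complex_of_real (1 / q) * (complex_of_real (wr G21 x) * complex_of_real (wr Dl x))"
    using c[OF i12] by (simp only: of_real_mult)
  show "complex_of_real (wr Dl (x + v G22)) * complex_of_real (wr G22 x) =
    complex_of_real (wr G22 x) * complex_of_real (wr Dl x)"
    using c[OF i13] by (simp only: of_real_mult)
qed

lemma dag_real:
  fixes v :: "gen \<Rightarrow> pt" and wr :: "gen \<Rightarrow> pt \<Rightarrow> real"
  assumes vD: "v Dl = 0" and vDi: "v DlInv = 0"
    and v1: "v G22 = - v G11" and v2: "v G21 = - v G12"
    and d1: "\<And>x. wr G22 x = wr G11 (x + v G22)"
    and d2: "\<And>x. - wr G21 x = wr G12 (x + v G21)"
    and d3: "\<And>x. - wr G12 x = wr G21 (x + v G12)"
    and d4: "\<And>x. wr G11 x = wr G22 (x + v G11)"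
  shows "E v (\<lambda>g x. complex_of_real (wr g x)) (dag_gen g) y x
     = cnj (E v (\<lambda>g x. complex_of_real (wr g x)) (gen_el g) x y)"
proof (cases g)
  case G11
  have "(y = x + v G22) \<longleftrightarrow> (x = y + v G11)" using v1 by (auto simp: algebra_simps)
  moreover have "y = x + v G22 \<Longrightarrow> wr G22 x = wr G11 y" using d1 by simp
  ultimately show ?thesis using G11 by (simp add: E_gen)
next
  case G12
  have "(y = x + v G21) \<longleftrightarrow> (x = y + v G12)" using v2 by (auto simp: algebra_simps)
  moreover have "y = x + v G21 \<Longrightarrow> - wr G21 x = wr G12 y" using d2 by simp
  ultimately show ?thesis using G12 by (simp add: E_gen E_uminus)
next
  case G21
  have "(y = x + v G12) \<longleftrightarrow> (x = y + v G21)" using v2 by (auto simp: algebra_simps)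
  moreover have "y = x + v G12 \<Longrightarrow> - wr G12 x = wr G21 y" using d3 by simp
  ultimately show ?thesis using G21 by (simp add: E_gen E_uminus)
next
  case G22
  have "(y = x + v G11) \<longleftrightarrow> (x = y + v G22)" using v1 by (auto simp: algebra_simps)
  moreover have "y = x + v G11 \<Longrightarrow> wr G11 x = wr G22 y" using d4 by simp
  ultimately show ?thesis using G22 by (simp add: E_gen)
next
  case Dl then show ?thesis using vD by (auto simp: E_gen)
next
  case DlInv then show ?thesis using vDi by (auto simp: E_gen)
qed


definition be :: "real \<Rightarrow> int \<Rightarrow> real" where "be p n = p powr (real_of_int n + 1/2)"
definition al :: "real \<Rightarrow> int \<Rightarrow> real" where "al p n = sqrt (max 0 (1 - p * (be p n)\<^sup>2))"

context fixes p :: real assumes p0: "0 < p" begin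

lemma be_pos: "be p n > 0" using p0 by (simp add: be_def)

lemma be_succ: "be p (n + 1) = p * be p n"
proof -
  have e: "real_of_int (n + 1) + 1/2 = (real_of_int n + 1/2) + 1" by simp
  have "be p (n + 1) = p powr ((real_of_int n + 1/2) + 1)" unfolding be_def e ..
  also have "\<dots> = p powr (real_of_int n + 1/2) * p powr 1" by (rule powr_add)
  also have "\<dots> = p * be p n" using p0 by (simp add: be_def powr_one)
  finally show ?thesis .
qed

lemma be_pred: "be p n = p * be p (n - 1)"
  using be_succ[of "n - 1"] by simp

lemma pbe2: "p * (be p n)\<^sup>2 = p powr (2 * real_of_int n + 2)"
proof -
  have "p * (be p n)\<^sup>2 = p powr 1 * (p powr (real_of_int n + 1/2) * p powr (real_of_int n + 1/2))"
    using p0 by (simp add: be_def power2_eq_square)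
  also have "\<dots> = p powr (1 + ((real_of_int n + 1/2) + (real_of_int n + 1/2)))"
    by (simp only: powr_add)
  also have "1 + ((real_of_int n + 1/2) + (real_of_int n + 1/2)) = 2 * real_of_int n + 2" by simp
  finally show ?thesis .
qed

end

context fixes p :: real assumes p0: "0 < p" and p1: "p < 1" begin

lemma al_sq: "n \<ge> -1 \<Longrightarrow> al p n * al p n = 1 - p * (be p n)\<^sup>2"
proof -
  assume n: "n \<ge> -1"
  have "p * (be p n)\<^sup>2 \<le> 1" unfolding pbe2[OF p0]
    by (rule powr_le1) (use n p0 p1 in auto)
  then show ?thesis by (simp add: al_def)
qed

lemma al_pos: "n \<ge> 0 \<Longrightarrow> al p n > 0"
proof -
  assume n: "n \<ge> 0"
  have "p powr (2 * real_of_int n + 2) < p powr 0"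
    by (rule powr_less_mono') (use n p0 p1 in auto)
  then have "p * (be p n)\<^sup>2 < 1" using p0 by (simp add: pbe2[OF p0])
  then show ?thesis by (simp add: al_def)
qed

lemma al_m1: "al p (-1) = 0"
proof -
  have "p * (be p (-1))\<^sup>2 = 1" using p0 by (simp add: pbe2[OF p0])
  then show ?thesis by (simp add: al_def)
qed

end

lemma WT_gen2: "WT v w (gen_el g * gen_el h) (v h + v g) (\<lambda>x. w g (x + v h) * w h x)"
  by (auto simp: WT_def E_mult_gen E_gen add.assoc)

lemma WT_scal: "WT v w f u th \<Longrightarrow> WT v w (scalar c * f) u (\<lambda>x. c * th x)"
  by (simp add: WT_def E_scalar)

lemma WT_cong: "WT v w f u th \<Longrightarrow> u = u' \<Longrightarrow> (\<And>x. th x = th' x) \<Longrightarrow> WT v w f u' th'"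
  by (simp add: WT_def)

lemma x12_assoc: "q > 0 \<Longrightarrow> x12 q = scalar (cs q) * (gD * gB)"
  by (simp add: x_defs mult.assoc)
lemma x21_assoc: "q > 0 \<Longrightarrow> x21 q = scalar (ct q) * (gD * gC)"
  by (simp add: x_defs mult.assoc)


section \<open>The representation for q < 1\<close>

definition vlo :: "gen \<Rightarrow> pt" where
  "vlo g = (case g of G11 \<Rightarrow> (1,0) | G22 \<Rightarrow> (-1,0) | G12 \<Rightarrow> (0,1) | G21 \<Rightarrow> (0,-1) | Dl \<Rightarrow> 0 | DlInv \<Rightarrow> 0)"

definition wlo :: "real \<Rightarrow> real \<Rightarrow> gen \<Rightarrow> pt \<Rightarrow> real" where
  "wlo q m g x = (case x of (n, k) \<Rightarrow> (case g of G11 \<Rightarrow> al q n | G22 \<Rightarrow> al q (n - 1)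
     | G12 \<Rightarrow> be q n | G21 \<Rightarrow> - be q n | Dl \<Rightarrow> m * q powr real_of_int k
     | DlInv \<Rightarrow> 1 / (m * q powr real_of_int k)))"

lemma powr_int_succ: "q > 0 \<Longrightarrow> q powr real_of_int (k + 1) = q * q powr real_of_int k"
  by (simp add: powr_add)
lemma powr_int_pred: "q > 0 \<Longrightarrow> q powr real_of_int (k - 1) = q powr real_of_int k / q"
  by (simp add: powr_diff)

context fixes q m :: real assumes q0: "0 < q" and q1: "q < 1" and m0: "0 < m" begin

lemma lo_rels:
  assumes r: "r \<in> sl_rels q" and n: "fst x \<ge> 0"
  shows "E vlo (\<lambda>g x. complex_of_real (wlo q m g x)) r y x = 0"
proof -
  obtain n k where x: "x = (n, k)" by (cases x) auto
  have n0: "n \<ge> 0" using n x by simp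
  have bs: "be q (n + 1) = q * be q n" by (rule be_succ[OF q0])
  have bp: "be q n = q * be q (n - 1)" by (rule be_pred[OF q0])
  have a1: "al q (n - 1) * al q (n - 1) = 1 - q * (be q (n - 1))\<^sup>2" by (rule al_sq[OF q0 q1]) (use n0 in simp)
  have a0: "al q n * al q n = 1 - q * (be q n)\<^sup>2" by (rule al_sq[OF q0 q1]) (use n0 in simp)
  have pk: "q powr (real_of_int k + 1) = q * q powr real_of_int k"
    using powr_int_succ[OF q0, of k] by simp
  have pk': "q powr (real_of_int k - 1) = q powr real_of_int k / q"
    using powr_int_pred[OF q0, of k] by simp
  have qk: "q powr real_of_int k > 0" using q0 by simp
  show ?thesis
  proof (rule rels_real[OF _ _ _ _ _ _ _ _ _ _ _ _ _ _ _ _ r])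
    show "vlo Dl = 0" "vlo DlInv = 0" "vlo G22 = - vlo G11" "vlo G21 = - vlo G12"
      by (simp_all add: vlo_def)
    show "wlo q m G11 (x + vlo G12) * wlo q m G12 x = 1 / q * (wlo q m G12 (x + vlo G11) * wlo q m G11 x)"
      using q0 by (simp add: x vlo_def wlo_def bs)
    show "wlo q m G11 (x + vlo G21) * wlo q m G21 x = 1 / q * (wlo q m G21 (x + vlo G11) * wlo q m G11 x)"
      using q0 by (simp add: x vlo_def wlo_def bs)
    show "wlo q m G12 (x + vlo G22) * wlo q m G22 x = 1 / q * (wlo q m G22 (x + vlo G12) * wlo q m G12 x)"
      using q0 by (simp add: x vlo_def wlo_def bp)
    show "wlo q m G21 (x + vlo G22) * wlo q m G22 x = 1 / q * (wlo q m G22 (x + vlo G21) * wlo q m G21 x)"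
      using q0 by (simp add: x vlo_def wlo_def bp)
    show "wlo q m G12 (x + vlo G21) * wlo q m G21 x = wlo q m G21 (x + vlo G12) * wlo q m G12 x"
      by (simp add: x vlo_def wlo_def)
    show "wlo q m G11 (x + vlo G22) * wlo q m G22 x - 1 / q * wlo q m G12 (x + vlo G21) * wlo q m G21 x = 1"
      using q0 by (simp add: x vlo_def wlo_def a1 bp power2_eq_square)
    show "wlo q m G22 (x + vlo G11) * wlo q m G11 x - q * wlo q m G21 (x + vlo G12) * wlo q m G12 x = 1"
      using q0 by (simp add: x vlo_def wlo_def a0 power2_eq_square)
    show "wlo q m Dl x * wlo q m DlInv x = 1"
      using m0 qk by (simp add: x wlo_def)
    show "wlo q m Dl (x + vlo G11) * wlo q m G11 x = wlo q m G11 x * wlo q m Dl x"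
      by (simp add: x vlo_def wlo_def)
    show "wlo q m Dl (x + vlo G12) * wlo q m G12 x = q * (wlo q m G12 x * wlo q m Dl x)"
      by (simp add: x vlo_def wlo_def pk)
    show "wlo q m Dl (x + vlo G21) * wlo q m G21 x = 1 / q * (wlo q m G21 x * wlo q m Dl x)"
      using q0 by (simp add: x vlo_def wlo_def pk')
    show "wlo q m Dl (x + vlo G22) * wlo q m G22 x = wlo q m G22 x * wlo q m Dl x"
      by (simp add: x vlo_def wlo_def)
  qed
qed


abbreviation "Wlo \<equiv> (\<lambda>g x. complex_of_real (wlo q m g x))"

lemma lo_dag: "E vlo Wlo (dag_gen g) y x = cnj (E vlo Wlo (gen_el g) x y)"
  by (rule dag_real) (auto simp: vlo_def wlo_def split: prod.splits)

lemma lo_inv: "x \<in> {x. fst x \<ge> 0} \<Longrightarrow> Wlo g x \<noteq> 0 \<Longrightarrow> x + vlo g \<in> {x. fst x \<ge> 0}"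
proof -
  assume x: "x \<in> {x. fst x \<ge> 0}" and w: "Wlo g x \<noteq> 0"
  obtain n k where xe: "x = (n, k)" by (cases x) auto
  show ?thesis
  proof (cases g)
    case G22
    have "n \<noteq> 0" using w al_m1[OF q0 q1] by (auto simp: G22 xe wlo_def)
    then show ?thesis using x by (simp add: G22 xe vlo_def)
  qed (use x in \<open>auto simp: xe vlo_def\<close>)
qed

lemma lo_K: "f \<in> sl_ideal q \<Longrightarrow> f \<in> Kset vlo Wlo {x. fst x \<ge> 0}"
  by (rule ideal_K[OF lo_inv]) (auto simp: Kset_def intro: lo_rels)

lemma lo_WT:
  "WT vlo Wlo (x11 q) (1,0) (\<lambda>x. complex_of_real m * complex_of_real (q powr real_of_int (snd x) * al q (fst x)))"
  "WT vlo Wlo (x12 q) (0,1) (\<lambda>x. complex_of_real m * (cs q * complex_of_real (q powr (real_of_int (snd x) + 1) * be q (fst x))))"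
  "WT vlo Wlo (x21 q) (0,-1) (\<lambda>x. complex_of_real m * (ct q * complex_of_real (q powr (real_of_int (snd x) - 1) * - be q (fst x))))"
  "WT vlo Wlo (x22 q) (-1,0) (\<lambda>x. complex_of_real m * complex_of_real (q powr real_of_int (snd x) * al q (fst x - 1)))"
proof -
  show "WT vlo Wlo (x11 q) (1,0) (\<lambda>x. complex_of_real m * complex_of_real (q powr real_of_int (snd x) * al q (fst x)))"
    unfolding x11_def by (rule WT_cong[OF WT_gen2]) (auto simp: vlo_def wlo_def split: prod.splits)
  show "WT vlo Wlo (x12 q) (0,1) (\<lambda>x. complex_of_real m * (cs q * complex_of_real (q powr (real_of_int (snd x) + 1) * be q (fst x))))"
    unfolding x12_assoc[OF q0]
    by (rule WT_cong[OF WT_scal[OF WT_gen2]]) (auto simp: vlo_def wlo_def split: prod.splits)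
  show "WT vlo Wlo (x21 q) (0,-1) (\<lambda>x. complex_of_real m * (ct q * complex_of_real (q powr (real_of_int (snd x) - 1) * - be q (fst x))))"
    unfolding x21_assoc[OF q0]
    by (rule WT_cong[OF WT_scal[OF WT_gen2]]) (auto simp: vlo_def wlo_def split: prod.splits)
  show "WT vlo Wlo (x22 q) (-1,0) (\<lambda>x. complex_of_real m * complex_of_real (q powr real_of_int (snd x) * al q (fst x - 1)))"
    unfolding x22_def by (rule WT_cong[OF WT_gen2]) (auto simp: vlo_def wlo_def split: prod.splits)
qed

end

lemma Kset_E: "f \<in> Kset v w G \<Longrightarrow> x \<in> G \<Longrightarrow> E v w f y x = 0"
  unfolding Kset_def by blast

lemma cs_nz: "q > 0 \<Longrightarrow> cs q \<noteq> 0" by (simp add: cs_def)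
lemma ct_nz: "q > 0 \<Longrightarrow> ct q \<noteq> 0" by (simp add: ct_def)

lemma lo_pos:
  assumes q0: "0 < q" and q1: "q < 1" and m0: "m > 0" and fin: "finite A" and i: "i \<in> A"
    and s: "(\<Sum>j\<in>A. dagger (t j) * t j) \<in> sl_ideal q" and x: "fst x \<ge> 0"
  shows "E vlo (\<lambda>g x. complex_of_real (wlo q m g x)) (t i) y x = 0"
proof (rule positivity[OF lo_dag[OF q0 q1 m0] fin i])
  show "E vlo (\<lambda>g x. complex_of_real (wlo q m g x)) (\<Sum>j\<in>A. dagger (t j) * t j) x x = 0"
    using Kset_E[OF lo_K[OF q0 q1 m0 s]] x by simp
qed

lemma lo_main:
  assumes q0: "0 < q" and q1: "q < 1" and t: "t \<in> minkowski q"
    and z: "\<And>m x y. m > 0 \<Longrightarrow> fst x \<ge> 0 \<Longrightarrow> E vlo (\<lambda>g x. complex_of_real (wlo q m g x)) t y x = 0"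
  shows "t \<in> sl_ideal q"
proof -
  obtain C where C: "cg q t (lsum4 (x11 q) (x12 q) (x21 q) (x22 q) C)"
    using span_fwd[OF q0 t] unfolding Sp4_def by blast
  have van: "E vlo (\<lambda>g x. complex_of_real (wlo q m g x)) (lsum4 (x11 q) (x12 q) (x21 q) (x22 q) C) y (n, k) = 0"
    if m: "m > 0" and n: "n \<ge> 0" for m n k y
  proof -
    have "t - lsum4 (x11 q) (x12 q) (x21 q) (x22 q) C \<in> sl_ideal q" using C by (simp add: cg_def)
    then have "E vlo (\<lambda>g x. complex_of_real (wlo q m g x)) (t - lsum4 (x11 q) (x12 q) (x21 q) (x22 q) C) y (n, k) = 0"
      using Kset_E[OF lo_K[OF q0 q1 m]] n by simp
    then show ?thesis using z[OF m, of "(n,k)" y] n by (simp add: E_diff)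
  qed
  have "C = 0"
  proof (rule indep_boundary[where v = vlo and w = "\<lambda>m g x. complex_of_real (wlo q m g x)" and e = 1])
    fix m :: real assume m: "m > 0"
    show "WT vlo (\<lambda>g x. complex_of_real (wlo q m g x)) (x11 q) (1,0)
        (\<lambda>x. complex_of_real m * complex_of_real (q powr real_of_int (snd x) * al q (fst x)))"
      by (rule lo_WT(1)[OF q0 q1 m])
    show "WT vlo (\<lambda>g x. complex_of_real (wlo q m g x)) (x12 q) (0,1)
        (\<lambda>x. complex_of_real m * (cs q * complex_of_real (q powr (real_of_int (snd x) + 1) * be q (fst x))))"
      by (rule lo_WT(2)[OF q0 q1 m])
    show "WT vlo (\<lambda>g x. complex_of_real (wlo q m g x)) (x21 q) (0,-1)
        (\<lambda>x. complex_of_real m * (ct q * complex_of_real (q powr (real_of_int (snd x) - 1) * - be q (fst x))))"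
      by (rule lo_WT(3)[OF q0 q1 m])
    show "WT vlo (\<lambda>g x. complex_of_real (wlo q m g x)) (x22 q) (-1,0)
        (\<lambda>x. complex_of_real m * complex_of_real (q powr real_of_int (snd x) * al q (fst x - 1)))"
      by (rule lo_WT(4)[OF q0 q1 m])
  next
    fix n k :: int assume "n \<ge> 0"
    then show "complex_of_real (q powr real_of_int (snd (n, k)) * al q (fst (n, k))) \<noteq> 0"
      using al_pos[OF q0 q1] q0 by (simp add: less_imp_neq[symmetric])
  next
    fix n k :: int assume "n \<ge> 0"
    then show "cs q * complex_of_real (q powr (real_of_int (snd (n, k)) + 1) * be q (fst (n, k))) \<noteq> 0"
      using be_pos[OF q0] cs_nz[OF q0] q0 by (simp add: less_imp_neq[symmetric])
  next
    fix n k :: int assume "n \<ge> 0"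
    then show "ct q * complex_of_real (q powr (real_of_int (snd (n, k)) - 1) * - be q (fst (n, k))) \<noteq> 0"
      using be_pos[OF q0] ct_nz[OF q0] q0 by (simp add: less_imp_neq[symmetric])
  next
    fix n k :: int assume "n \<ge> 1"
    then show "complex_of_real (q powr real_of_int (snd (n, k)) * al q (fst (n, k) - 1)) \<noteq> 0"
      using al_pos[OF q0 q1, of "n - 1"] q0 by (simp add: less_imp_neq[symmetric])
  next
    fix k :: int
    show "complex_of_real (q powr real_of_int (snd (0, k)) * al q (fst (0::int, k) - 1)) = 0"
      using al_m1[OF q0 q1] by simp
  qed (use van in auto)
  then have "cg q t 0" using C by simp
  then show ?thesis by (simp add: cg_zero_iff)
qed


section \<open>The representation for q > 1\<close>

definition vhi :: "gen \<Rightarrow> pt" where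
  "vhi g = (case g of G11 \<Rightarrow> (-1,0) | G22 \<Rightarrow> (1,0) | G12 \<Rightarrow> (0,1) | G21 \<Rightarrow> (0,-1) | Dl \<Rightarrow> 0 | DlInv \<Rightarrow> 0)"

definition whi :: "real \<Rightarrow> real \<Rightarrow> gen \<Rightarrow> pt \<Rightarrow> real" where
  "whi q m g x = (case x of (n, k) \<Rightarrow> (case g of G11 \<Rightarrow> al (1/q) (n - 1) | G22 \<Rightarrow> al (1/q) n
     | G12 \<Rightarrow> be (1/q) n | G21 \<Rightarrow> - be (1/q) n | Dl \<Rightarrow> m * q powr real_of_int k
     | DlInv \<Rightarrow> 1 / (m * q powr real_of_int k)))"

context fixes q m :: real assumes q1: "1 < q" and m0: "0 < m" begin

lemma q0: "0 < q" using q1 by simp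
lemma p0: "0 < 1/q" using q1 by simp
lemma p1: "1/q < 1" using q1 by simp

lemma hi_rels:
  assumes r: "r \<in> sl_rels q" and n: "fst x \<ge> 0"
  shows "E vhi (\<lambda>g x. complex_of_real (whi q m g x)) r y x = 0"
proof -
  obtain n k where x: "x = (n, k)" by (cases x) auto
  have n0: "n \<ge> 0" using n x by simp
  have bs: "be (1/q) (n + 1) = 1/q * be (1/q) n" by (rule be_succ[OF p0])
  have bp: "be (1/q) n = 1/q * be (1/q) (n - 1)" by (rule be_pred[OF p0])
  have a1: "al (1/q) (n - 1) * al (1/q) (n - 1) = 1 - 1/q * (be (1/q) (n - 1))\<^sup>2"
    by (rule al_sq[OF p0 p1]) (use n0 in simp)
  have a0: "al (1/q) n * al (1/q) n = 1 - 1/q * (be (1/q) n)\<^sup>2" by (rule al_sq[OF p0 p1]) (use n0 in simp)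
  have pk: "q powr (real_of_int k + 1) = q * q powr real_of_int k"
    using powr_int_succ[OF q0, of k] by simp
  have pk': "q powr (real_of_int k - 1) = q powr real_of_int k / q"
    using powr_int_pred[OF q0, of k] by simp
  have qk: "q powr real_of_int k > 0" using q0 by simp
  note q0' = q0
  show ?thesis
  proof (rule rels_real[OF _ _ _ _ _ _ _ _ _ _ _ _ _ _ _ _ r])
    show "vhi Dl = 0" "vhi DlInv = 0" "vhi G22 = - vhi G11" "vhi G21 = - vhi G12"
      by (simp_all add: vhi_def)
    show "whi q m G11 (x + vhi G12) * whi q m G12 x = 1 / q * (whi q m G12 (x + vhi G11) * whi q m G11 x)"
      using q0 by (simp add: x vhi_def whi_def bp)
    show "whi q m G11 (x + vhi G21) * whi q m G21 x = 1 / q * (whi q m G21 (x + vhi G11) * whi q m G11 x)"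
      using q0 by (simp add: x vhi_def whi_def bp)
    show "whi q m G12 (x + vhi G22) * whi q m G22 x = 1 / q * (whi q m G22 (x + vhi G12) * whi q m G12 x)"
      using q0 by (simp add: x vhi_def whi_def bs)
    show "whi q m G21 (x + vhi G22) * whi q m G22 x = 1 / q * (whi q m G22 (x + vhi G21) * whi q m G21 x)"
      using q0 by (simp add: x vhi_def whi_def bs)
    show "whi q m G12 (x + vhi G21) * whi q m G21 x = whi q m G21 (x + vhi G12) * whi q m G12 x"
      by (simp add: x vhi_def whi_def)
    show "whi q m G11 (x + vhi G22) * whi q m G22 x - 1 / q * whi q m G12 (x + vhi G21) * whi q m G21 x = 1"
      using q0 by (simp add: x vhi_def whi_def a0 power2_eq_square)
    show "whi q m G22 (x + vhi G11) * whi q m G11 x - q * whi q m G21 (x + vhi G12) * whi q m G12 x = 1"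
      using q0 by (simp add: x vhi_def whi_def a1 bp power2_eq_square)
    show "whi q m Dl x * whi q m DlInv x = 1"
      using m0 qk by (simp add: x whi_def)
    show "whi q m Dl (x + vhi G11) * whi q m G11 x = whi q m G11 x * whi q m Dl x"
      by (simp add: x vhi_def whi_def)
    show "whi q m Dl (x + vhi G12) * whi q m G12 x = q * (whi q m G12 x * whi q m Dl x)"
      by (simp add: x vhi_def whi_def pk)
    show "whi q m Dl (x + vhi G21) * whi q m G21 x = 1 / q * (whi q m G21 x * whi q m Dl x)"
      using q0 by (simp add: x vhi_def whi_def pk')
    show "whi q m Dl (x + vhi G22) * whi q m G22 x = whi q m G22 x * whi q m Dl x"
      by (simp add: x vhi_def whi_def)
  qed
qed

abbreviation "Whi \<equiv> (\<lambda>g x. complex_of_real (whi q m g x))"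

lemma hi_dag: "E vhi Whi (dag_gen g) y x = cnj (E vhi Whi (gen_el g) x y)"
  by (rule dag_real) (auto simp: vhi_def whi_def split: prod.splits)

lemma hi_inv: "x \<in> {x. fst x \<ge> 0} \<Longrightarrow> Whi g x \<noteq> 0 \<Longrightarrow> x + vhi g \<in> {x. fst x \<ge> 0}"
proof -
  assume x: "x \<in> {x. fst x \<ge> 0}" and w: "Whi g x \<noteq> 0"
  obtain n k where xe: "x = (n, k)" by (cases x) auto
  show ?thesis
  proof (cases g)
    case G11
    have "n \<noteq> 0" using w al_m1[OF p0 p1] by (auto simp: G11 xe whi_def)
    then show ?thesis using x by (simp add: G11 xe vhi_def)
  qed (use x in \<open>auto simp: xe vhi_def\<close>)
qed

lemma hi_K: "f \<in> sl_ideal q \<Longrightarrow> f \<in> Kset vhi Whi {x. fst x \<ge> 0}"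
  by (rule ideal_K[OF hi_inv]) (auto simp: Kset_def intro: hi_rels)

lemma hi_WT:
  "WT vhi Whi (x22 q) (1,0) (\<lambda>x. complex_of_real m * complex_of_real (q powr real_of_int (snd x) * al (1/q) (fst x)))"
  "WT vhi Whi (x21 q) (0,-1) (\<lambda>x. complex_of_real m * (ct q * complex_of_real (q powr (real_of_int (snd x) - 1) * - be (1/q) (fst x))))"
  "WT vhi Whi (x12 q) (0,1) (\<lambda>x. complex_of_real m * (cs q * complex_of_real (q powr (real_of_int (snd x) + 1) * be (1/q) (fst x))))"
  "WT vhi Whi (x11 q) (-1,0) (\<lambda>x. complex_of_real m * complex_of_real (q powr real_of_int (snd x) * al (1/q) (fst x - 1)))"
proof -
  show "WT vhi Whi (x22 q) (1,0) (\<lambda>x. complex_of_real m * complex_of_real (q powr real_of_int (snd x) * al (1/q) (fst x)))"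
    unfolding x22_def by (rule WT_cong[OF WT_gen2]) (auto simp: vhi_def whi_def split: prod.splits)
  show "WT vhi Whi (x21 q) (0,-1) (\<lambda>x. complex_of_real m * (ct q * complex_of_real (q powr (real_of_int (snd x) - 1) * - be (1/q) (fst x))))"
    unfolding x21_assoc[OF q0]
    by (rule WT_cong[OF WT_scal[OF WT_gen2]]) (auto simp: vhi_def whi_def split: prod.splits)
  show "WT vhi Whi (x12 q) (0,1) (\<lambda>x. complex_of_real m * (cs q * complex_of_real (q powr (real_of_int (snd x) + 1) * be (1/q) (fst x))))"
    unfolding x12_assoc[OF q0]
    by (rule WT_cong[OF WT_scal[OF WT_gen2]]) (auto simp: vhi_def whi_def split: prod.splits)
  show "WT vhi Whi (x11 q) (-1,0) (\<lambda>x. complex_of_real m * complex_of_real (q powr real_of_int (snd x) * al (1/q) (fst x - 1)))"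
    unfolding x11_def by (rule WT_cong[OF WT_gen2]) (auto simp: vhi_def whi_def split: prod.splits)
qed

end

lemma hi_pos:
  assumes q1: "1 < q" and m0: "m > 0" and fin: "finite A" and i: "i \<in> A"
    and s: "(\<Sum>j\<in>A. dagger (t j) * t j) \<in> sl_ideal q" and x: "fst x \<ge> 0"
  shows "E vhi (\<lambda>g x. complex_of_real (whi q m g x)) (t i) y x = 0"
proof (rule positivity[OF hi_dag[OF q1 m0] fin i])
  show "E vhi (\<lambda>g x. complex_of_real (whi q m g x)) (\<Sum>j\<in>A. dagger (t j) * t j) x x = 0"
    using Kset_E[OF hi_K[OF q1 m0 s]] x by simp
qed

lemma hi_main:
  assumes q1: "1 < q" and t: "t \<in> minkowski q"
    and z: "\<And>m x y. m > 0 \<Longrightarrow> fst x \<ge> 0 \<Longrightarrow> E vhi (\<lambda>g x. complex_of_real (whi q m g x)) t y x = 0"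
  shows "t \<in> sl_ideal q"
proof -
  have q0: "0 < q" using q1 by simp
  have p0: "0 < 1/q" and p1: "1/q < 1" using q1 by simp_all
  obtain C where C: "cg q t (lsum4 (x22 q) (x21 q) (x12 q) (x11 q) C)"
    using span_rev[OF q0 t] unfolding Sp4_def by blast
  have van: "E vhi (\<lambda>g x. complex_of_real (whi q m g x)) (lsum4 (x22 q) (x21 q) (x12 q) (x11 q) C) y (n, k) = 0"
    if m: "m > 0" and n: "n \<ge> 0" for m n k y
  proof -
    have "t - lsum4 (x22 q) (x21 q) (x12 q) (x11 q) C \<in> sl_ideal q" using C by (simp add: cg_def)
    then have "E vhi (\<lambda>g x. complex_of_real (whi q m g x)) (t - lsum4 (x22 q) (x21 q) (x12 q) (x11 q) C) y (n, k) = 0"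
      using Kset_E[OF hi_K[OF q1 m]] n by simp
    then show ?thesis using z[OF m, of "(n,k)" y] n by (simp add: E_diff)
  qed
  have "C = 0"
  proof (rule indep_boundary[where v = vhi and w = "\<lambda>m g x. complex_of_real (whi q m g x)" and e = "-1"])
    fix m :: real assume m: "m > 0"
    show "WT vhi (\<lambda>g x. complex_of_real (whi q m g x)) (x22 q) (1,0)
        (\<lambda>x. complex_of_real m * complex_of_real (q powr real_of_int (snd x) * al (1/q) (fst x)))"
      by (rule hi_WT(1)[OF q1 m])
    show "WT vhi (\<lambda>g x. complex_of_real (whi q m g x)) (x21 q) (0,-1)
        (\<lambda>x. complex_of_real m * (ct q * complex_of_real (q powr (real_of_int (snd x) - 1) * - be (1/q) (fst x))))"
      by (rule hi_WT(2)[OF q1 m])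
    show "WT vhi (\<lambda>g x. complex_of_real (whi q m g x)) (x12 q) (0, - (- 1))
        (\<lambda>x. complex_of_real m * (cs q * complex_of_real (q powr (real_of_int (snd x) + 1) * be (1/q) (fst x))))"
      using hi_WT(3)[OF q1 m] by simp
    show "WT vhi (\<lambda>g x. complex_of_real (whi q m g x)) (x11 q) (-1,0)
        (\<lambda>x. complex_of_real m * complex_of_real (q powr real_of_int (snd x) * al (1/q) (fst x - 1)))"
      by (rule hi_WT(4)[OF q1 m])
  next
    fix n k :: int assume "n \<ge> 0"
    then show "complex_of_real (q powr real_of_int (snd (n, k)) * al (1/q) (fst (n, k))) \<noteq> 0"
      using al_pos[OF p0 p1] q0 by (simp add: less_imp_neq[symmetric])
  next
    fix n k :: int assume "n \<ge> 0"
    then show "ct q * complex_of_real (q powr (real_of_int (snd (n, k)) - 1) * - be (1/q) (fst (n, k))) \<noteq> 0"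
      using be_pos[OF p0] ct_nz[OF q0] q0 by (simp add: less_imp_neq[symmetric])
  next
    fix n k :: int assume "n \<ge> 0"
    then show "cs q * complex_of_real (q powr (real_of_int (snd (n, k)) + 1) * be (1/q) (fst (n, k))) \<noteq> 0"
      using be_pos[OF p0] cs_nz[OF q0] q0 by (simp add: less_imp_neq[symmetric])
  next
    fix n k :: int assume "n \<ge> 1"
    then show "complex_of_real (q powr real_of_int (snd (n, k)) * al (1/q) (fst (n, k) - 1)) \<noteq> 0"
      using al_pos[OF p0 p1, of "n - 1"] q0 by (simp add: less_imp_neq[symmetric])
  next
    fix k :: int
    show "complex_of_real (q powr real_of_int (snd (0, k)) * al (1/q) (fst (0::int, k) - 1)) = 0"
      using al_m1[OF p0 p1] by simp
  qed (use van in auto)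
  then have "cg q t 0" using C by simp
  then show ?thesis by (simp add: cg_zero_iff)
qed


section \<open>The representation family for q = 1\<close>

definition wone :: "real \<Rightarrow> real \<Rightarrow> gen \<Rightarrow> pt \<Rightarrow> real" where
  "wone s t g x = (let r = sqrt (s\<^sup>2 + t\<^sup>2) in (case g of G11 \<Rightarrow> s / r | G22 \<Rightarrow> s / r
     | G12 \<Rightarrow> t / r | G21 \<Rightarrow> - t / r | Dl \<Rightarrow> r | DlInv \<Rightarrow> 1 / r))"

context fixes s t :: real assumes s0: "0 < s" and t0: "0 < t" begin

lemma s_nz: "s \<noteq> 0" using s0 by simp

lemma rho_pos: "sqrt (s\<^sup>2 + t\<^sup>2) > 0" using s0 t0 by (simp add: add_pos_pos)

lemma rho_sq: "sqrt (s\<^sup>2 + t\<^sup>2) * sqrt (s\<^sup>2 + t\<^sup>2) = s\<^sup>2 + t\<^sup>2"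
  using s0 t0 by (simp add: add_nonneg_nonneg)

lemma one_rels:
  assumes r: "r \<in> sl_rels 1"
  shows "E vlo (\<lambda>g x. complex_of_real (wone s t g x)) r y x = 0"
proof -
  define rr where "rr = sqrt (s\<^sup>2 + t\<^sup>2)"
  have rr0: "rr > 0" using rho_pos by (simp add: rr_def)
  have rr2: "rr * rr = s\<^sup>2 + t\<^sup>2" using rho_sq by (simp add: rr_def)
  have w: "wone s t g x = (case g of G11 \<Rightarrow> s / rr | G22 \<Rightarrow> s / rr
     | G12 \<Rightarrow> t / rr | G21 \<Rightarrow> - t / rr | Dl \<Rightarrow> rr | DlInv \<Rightarrow> 1 / rr)" for g x
    unfolding wone_def Let_def rr_def by (rule refl)
  have i6: "s / rr * (s / rr) + t / rr * (t / rr) = 1"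
  proof -
    have "s / rr * (s / rr) + t / rr * (t / rr) = (s\<^sup>2 + t\<^sup>2) / (rr * rr)"
      by (simp add: power2_eq_square add_divide_distrib)
    then show ?thesis using rr2 rr0 s_nz by simp
  qed
  show ?thesis
  proof (rule rels_real[OF _ _ _ _ _ _ _ _ _ _ _ _ _ _ _ _ r])
    show "vlo Dl = 0" "vlo DlInv = 0" "vlo G22 = - vlo G11" "vlo G21 = - vlo G12"
      by (simp_all add: vlo_def)
  qed (use rr0 i6 in \<open>simp_all add: w\<close>)
qed

abbreviation "Wone \<equiv> (\<lambda>g x. complex_of_real (wone s t g x))"

lemma one_dag: "E vlo Wone (dag_gen g) y x = cnj (E vlo Wone (gen_el g) x y)"
  by (rule dag_real) (auto simp: vlo_def wone_def Let_def s_nz)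

lemma one_K: "f \<in> sl_ideal 1 \<Longrightarrow> f \<in> Kset vlo Wone UNIV"
  by (rule ideal_K) (auto simp: Kset_def intro: one_rels)

lemma one_WT:
  "WT vlo Wone (x11 1) (1,0) (\<lambda>x. complex_of_real s)"
  "WT vlo Wone (x12 1) (0,1) (\<lambda>x. complex_of_real t)"
  "WT vlo Wone (x21 1) (0,-1) (\<lambda>x. - complex_of_real t)"
  "WT vlo Wone (x22 1) (-1,0) (\<lambda>x. complex_of_real s)"
proof -
  have r0: "sqrt (s\<^sup>2 + t\<^sup>2) \<noteq> 0" using rho_pos by linarith
  have c1: "cs 1 = 1" "ct 1 = 1" by (simp_all add: cs_def ct_def)
  have e: "sqrt (s\<^sup>2 + t\<^sup>2) * s / sqrt (s\<^sup>2 + t\<^sup>2) = s"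
    "sqrt (s\<^sup>2 + t\<^sup>2) * t / sqrt (s\<^sup>2 + t\<^sup>2) = t"
    "sqrt (s\<^sup>2 + t\<^sup>2) * (s / sqrt (s\<^sup>2 + t\<^sup>2)) = s"
    "sqrt (s\<^sup>2 + t\<^sup>2) * (t / sqrt (s\<^sup>2 + t\<^sup>2)) = t"
    "sqrt (s\<^sup>2 + t\<^sup>2) * (- t / sqrt (s\<^sup>2 + t\<^sup>2)) = - t"
    using r0 by simp_all
  show "WT vlo Wone (x11 1) (1,0) (\<lambda>x. complex_of_real s)"
    unfolding x11_def by (rule WT_cong[OF WT_gen2]) (auto simp: vlo_def wone_def Let_def e simp flip: of_real_mult of_real_divide)
  show "WT vlo Wone (x12 1) (0,1) (\<lambda>x. complex_of_real t)"
    unfolding x12_assoc[of 1, simplified] c1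
    by (rule WT_cong[OF WT_scal[OF WT_gen2]]) (auto simp: vlo_def wone_def Let_def e simp flip: of_real_mult of_real_divide)
  show "WT vlo Wone (x21 1) (0,-1) (\<lambda>x. - complex_of_real t)"
    unfolding x21_assoc[of 1, simplified] c1
    by (rule WT_cong[OF WT_scal[OF WT_gen2]]) (auto simp: vlo_def wone_def Let_def e simp flip: of_real_mult of_real_divide)
  show "WT vlo Wone (x22 1) (-1,0) (\<lambda>x. complex_of_real s)"
    unfolding x22_def by (rule WT_cong[OF WT_gen2]) (auto simp: vlo_def wone_def Let_def e simp flip: of_real_mult of_real_divide)
qed

end

lemma one_pos:
  assumes s0: "s > 0" and t0: "t > 0" and fin: "finite A" and i: "i \<in> A"
    and sm: "(\<Sum>j\<in>A. dagger (f j) * f j) \<in> sl_ideal 1"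
  shows "E vlo (\<lambda>g x. complex_of_real (wone s t g x)) (f i) y x = 0"
proof (rule positivity[OF one_dag[OF s0 t0] fin i])
  show "E vlo (\<lambda>g x. complex_of_real (wone s t g x)) (\<Sum>j\<in>A. dagger (f j) * f j) x x = 0"
    using Kset_E[OF one_K[OF s0 t0 sm]] by simp
qed

lemma one_main:
  assumes f: "f \<in> minkowski 1"
    and z: "\<And>s t y. s > 0 \<Longrightarrow> t > 0 \<Longrightarrow> E vlo (\<lambda>g x. complex_of_real (wone s t g x)) f y (0,0) = 0"
  shows "f \<in> sl_ideal 1"
proof -
  obtain C where C: "cg 1 f (lsum4 (x11 1) (x12 1) (x21 1) (x22 1) C)"
    using span_fwd[of 1 f] f unfolding Sp4_def by auto
  have van: "E vlo (\<lambda>g x. complex_of_real (wone s t g x)) (lsum4 (x11 1) (x12 1) (x21 1) (x22 1) C) y (0,0) = 0"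
    if st: "s > 0" "t > 0" for s t y
  proof -
    have "f - lsum4 (x11 1) (x12 1) (x21 1) (x22 1) C \<in> sl_ideal 1" using C by (simp add: cg_def)
    then have "E vlo (\<lambda>g x. complex_of_real (wone s t g x)) (f - lsum4 (x11 1) (x12 1) (x21 1) (x22 1) C) y (0,0) = 0"
      using Kset_E[OF one_K[OF st]] by simp
    then show ?thesis using z[OF st, of y] by (simp add: E_diff)
  qed
  have "C = 0"
    by (rule indep_q1[where v = vlo and w = "\<lambda>s t g x. complex_of_real (wone s t g x)"])
      (use one_WT van in auto)
  then have "cg 1 f 0" using C by simp
  then show ?thesis by (simp add: cg_zero_iff)
qed


lemma dagger_lin: "dagger f = lin (\<lambda>w c. scalar (cnj c) * dag_word w) f"
  by (simp add: dagger_def lin_def)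

lemma dagger_add: "dagger (f + g) = dagger f + dagger g"
  unfolding dagger_lin by (rule lin_add) (simp_all add: scalar_add distrib_right)

lemma dagger_zero[simp]: "dagger 0 = 0" by (simp add: dagger_def)

lemma dagger_single: "dagger (Poly_Mapping.single w c) = scalar (cnj c) * dag_word w"
  unfolding dagger_lin by (rule lin_single) simp

lemma dagger_scalar: "dagger (scalar c * f) = scalar (cnj c) * dagger f"
proof (induction f rule: falg_induct)
  case zero then show ?case by simp
next
  case (add f w d)
  have "scalar c * Poly_Mapping.single w d = Poly_Mapping.single w (c * d)"
    by (simp add: scalar_def mult_single)
  then have "dagger (scalar c * (f + Poly_Mapping.single w d))
      = dagger (scalar c * f) + scalar (cnj (c * d)) * dag_word w"
    by (simp add: distrib_left dagger_add dagger_single)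
  also have "\<dots> = scalar (cnj c) * dagger (f + Poly_Mapping.single w d)"
    using add by (simp add: dagger_add dagger_single distrib_left mult_scalar_assoc)
  finally show ?case .
qed

lemma dagger_sum: "dagger (\<Sum>i\<in>A. g i) = (\<Sum>i\<in>A. dagger (g i))"
  by (induction A rule: infinite_finite_induct) (simp_all add: dagger_add)

lemma sc4: "scalar a * X * (scalar b * Y) = scalar (a * b) * (X * (Y::falg))"
  by (simp only: mult.assoc mult_scalar_right[of X] mult_scalar_assoc)

lemma tpair_eq:
  "tpair n m v f = (\<Sum>i<n. dagger (tcomp m v f i) * tcomp m v f i)"
proof -
  have "(\<Sum>i<n. dagger (tcomp m v f i) * tcomp m v f i)
      = (\<Sum>i<n. \<Sum>l<m. \<Sum>k<m. scalar (cnj (v k i)) * dagger (f k) * (scalar (v l i) * f l))"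
    by (simp add: tcomp_def dagger_sum dagger_scalar sum_distrib_left sum_distrib_right)
  also have "\<dots> = (\<Sum>i<n. \<Sum>l<m. \<Sum>k<m. scalar (cnj (v k i) * v l i) * (dagger (f k) * f l))"
    by (simp only: sc4)
  also have "\<dots> = (\<Sum>l<m. \<Sum>i<n. \<Sum>k<m. scalar (cnj (v k i) * v l i) * (dagger (f k) * f l))"
    by (rule sum.swap)
  also have "\<dots> = (\<Sum>l<m. \<Sum>k<m. \<Sum>i<n. scalar (cnj (v k i) * v l i) * (dagger (f k) * f l))"
    by (rule sum.cong[OF refl], rule sum.swap)
  also have "\<dots> = (\<Sum>k<m. \<Sum>l<m. \<Sum>i<n. scalar (cnj (v k i) * v l i) * (dagger (f k) * f l))"
    by (rule sum.swap)
  also have "\<dots> = tpair n m v f"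
    by (simp add: tpair_def herm_def scalar_sum sum_distrib_right)
  finally show ?thesis by simp
qed

lemma mink_zero: "0 \<in> minkowski q"
  using minkowski.scal[of 0 q] by simp

lemma mink_sum: "(\<And>i. i \<in> A \<Longrightarrow> g i \<in> minkowski q) \<Longrightarrow> (\<Sum>i\<in>A. g i) \<in> minkowski q"
  by (induction A rule: infinite_finite_induct) (auto intro: mink_zero minkowski.add)

lemma tcomp_mink: "(\<forall>k<m. f k \<in> minkowski q) \<Longrightarrow> tcomp m v f i \<in> minkowski q"
  unfolding tcomp_def by (rule mink_sum) (auto intro: minkowski.mult minkowski.scal)


theorem proposition3p4:
  fixes q :: real and n m :: nat
    and v :: "nat \<Rightarrow> nat \<Rightarrow> complex" and f :: "nat \<Rightarrow> falg"
  assumes "q > 0"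
    and "\<forall>k<m. f k \<in> minkowski q"
  shows "tpair n m v f \<in> sl_ideal q \<longleftrightarrow> (\<forall>i<n. tcomp m v f i \<in> sl_ideal q)"
proof
  have tm: "tcomp m v f i \<in> minkowski q" for i using tcomp_mink assms(2) by blast
  assume H: "tpair n m v f \<in> sl_ideal q"
  then have S: "(\<Sum>i\<in>{..<n}. dagger (tcomp m v f i) * tcomp m v f i) \<in> sl_ideal q"
    by (simp add: tpair_eq)
  show "\<forall>i<n. tcomp m v f i \<in> sl_ideal q"
  proof (intro allI impI)
    fix i assume i: "i < n"
    then have i': "i \<in> {..<n}" by simp
    consider "q < 1" | "q = 1" | "q > 1" by linarith
    then show "tcomp m v f i \<in> sl_ideal q"
    proof cases
      case 1
      show ?thesis
      proof (rule lo_main[OF assms(1) 1 tm])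
        fix mm :: real and x y :: pt assume "mm > 0" "fst x \<ge> 0"
        then show "E vlo (\<lambda>g x. complex_of_real (wlo q mm g x)) (tcomp m v f i) y x = 0"
          using lo_pos[OF assms(1) 1 _ finite_lessThan i' S] by blast
      qed
    next
      case 2
      have tm1: "tcomp m v f i \<in> minkowski 1" using tm 2 by simp
      have S1: "(\<Sum>i\<in>{..<n}. dagger (tcomp m v f i) * tcomp m v f i) \<in> sl_ideal 1" using S 2 by simp
      have "tcomp m v f i \<in> sl_ideal 1"
      proof (rule one_main[OF tm1])
        fix s t :: real and y :: pt assume "s > 0" "t > 0"
        then show "E vlo (\<lambda>g x. complex_of_real (wone s t g x)) (tcomp m v f i) y (0,0) = 0"
          using one_pos[OF _ _ finite_lessThan i' S1] by blast
      qed
      then show ?thesis using 2 by simp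
    next
      case 3
      show ?thesis
      proof (rule hi_main[OF 3 tm])
        fix mm :: real and x y :: pt assume "mm > 0" "fst x \<ge> 0"
        then show "E vhi (\<lambda>g x. complex_of_real (whi q mm g x)) (tcomp m v f i) y x = 0"
          using hi_pos[OF 3 _ finite_lessThan i' S] by blast
      qed
    qed
  qed
next
  assume H: "\<forall>i<n. tcomp m v f i \<in> sl_ideal q"
  have "(\<Sum>i<n. dagger (tcomp m v f i) * tcomp m v f i) \<in> sl_ideal q"
    by (rule I_sum) (use H I_lmult in blast)
  then show "tpair n m v f \<in> sl_ideal q" by (simp add: tpair_eq)
qed


end
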